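(* Let $\mathbb{M}^2$ be a Riemannian surface and $\psi:S\to\mathbb{M}^2\times\mathbb{R}$ an immersion with constant positive extrinsic curvature $K$, normal $N$ chosen so that $II$ is positive definite, and let $z$ be a local conformal parameter for $II$ with $I=E\,dz^2+2F|dz|^2+\bar E\,d\bar z^2$, $II=2\rho|dz|^2$. Then $$\Delta^{II}h=(2K-\kappa(1-\nu^2))\frac{\nu}{K},\qquad \Delta^{II}\nu=-2H\nu,\qquad E_{\bar z}=-\kappa\,\frac{\nu\rho}{K}\,h_z.$$
   Context: $\mathbb{M}^2\times\mathbb{R}$ has the product metric; $h$ is the height function of $S$, $\nu=\langle N,\partial_t\rangle$, $\kappa$ is the Gauss curvature of $\mathbb{M}^2$ evaluated at the projection of the point. $\Delta^{II}$ is the Laplacian of the Riemannian metric $II$ (so $\Delta^{II}=\frac{2}{\rho}\partial_z\partial_{\bar z}$). $H$ is the mean curvature, $H=-F\rho/D$ with $D=|E|^2-F^2$. *)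

theory Defs
  imports "HOL-Analysis.Analysis"
begin

text \<open>Points of a coordinate chart of the surface M^2 and the conformal parameter z
  are both encoded as complex numbers; coordinate 1 = real part, coordinate 2 = imaginary part.
  A tangent vector of M^2 at a chart point is likewise a complex number (a = a1 + i a2 means
  a1 d/dw1 + a2 d/dw2).  A tangent vector of M^2 x R is a pair of such a vector and a real number
  (the dt-component).\<close>

definition coord :: "nat \<Rightarrow> complex \<Rightarrow> real" where
  "coord i a = (if i = 1 then Re a else Im a)"

definition pdx :: "(complex \<Rightarrow> 'a::real_normed_vector) \<Rightarrow> complex \<Rightarrow> 'a" where
  "pdx f z = vector_derivative (\<lambda>s. f (Complex s (Im z))) (at (Re z))"

definition pdy :: "(complex \<Rightarrow> 'a::real_normed_vector) \<Rightarrow> complex \<Rightarrow> 'a" where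
  "pdy f z = vector_derivative (\<lambda>s. f (Complex (Re z) s)) (at (Im z))"

definition pd :: "nat \<Rightarrow> (complex \<Rightarrow> 'a::real_normed_vector) \<Rightarrow> complex \<Rightarrow> 'a" where
  "pd i f = (if i = 1 then pdx f else pdy f)"

primrec iter_pd :: "bool list \<Rightarrow> (complex \<Rightarrow> 'a::real_normed_vector) \<Rightarrow> complex \<Rightarrow> 'a" where
  "iter_pd [] f = f"
| "iter_pd (b # bs) f = (if b then pdx (iter_pd bs f) else pdy (iter_pd bs f))"

definition smooth_on :: "complex set \<Rightarrow> (complex \<Rightarrow> 'a::real_normed_vector) \<Rightarrow> bool" where
  "smooth_on \<Omega> f \<longleftrightarrow> (\<forall>bs. \<forall>z\<in>\<Omega>. iter_pd bs f differentiable (at z))"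

definition dz :: "(complex \<Rightarrow> complex) \<Rightarrow> complex \<Rightarrow> complex" where
  "dz f z = (pdx f z - \<i> * pdy f z) / 2"

definition dzb :: "(complex \<Rightarrow> complex) \<Rightarrow> complex \<Rightarrow> complex" where
  "dzb f z = (pdx f z + \<i> * pdy f z) / 2"

type_synonym metric = "nat \<Rightarrow> nat \<Rightarrow> complex \<Rightarrow> real"

definition gM :: "metric \<Rightarrow> complex \<Rightarrow> complex \<Rightarrow> complex \<Rightarrow> real" where
  "gM g w a b = (\<Sum>i\<in>{1,2}. \<Sum>j\<in>{1,2}. g i j w * coord i a * coord j b)"

definition detg :: "metric \<Rightarrow> complex \<Rightarrow> real" where
  "detg g w = g 1 1 w * g 2 2 w - g 1 2 w * g 2 1 w"

definition ginv :: "metric \<Rightarrow> nat \<Rightarrow> nat \<Rightarrow> complex \<Rightarrow> real" where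
  "ginv g k l w =
     (if k = 1 \<and> l = 1 then g 2 2 w / detg g w
      else if k = 2 \<and> l = 2 then g 1 1 w / detg g w
      else - g k l w / detg g w)"

definition chr :: "metric \<Rightarrow> nat \<Rightarrow> nat \<Rightarrow> nat \<Rightarrow> complex \<Rightarrow> real" where
  "chr g k i j w = 1/2 * (\<Sum>l\<in>{1,2}. ginv g k l w *
      (pd i (g j l) w + pd j (g i l) w - pd l (g i j) w))"

text \<open>Components R^l of R(d1,d2)d2, with R(X,Y)Z = nabla_X nabla_Y Z - nabla_Y nabla_X Z - nabla_[X,Y] Z.\<close>

definition riem :: "metric \<Rightarrow> nat \<Rightarrow> complex \<Rightarrow> real" where
  "riem g l w = pd 1 (chr g l 2 2) w - pd 2 (chr g l 1 2) w
     + (\<Sum>m\<in>{1,2}. chr g m 2 2 w * chr g l 1 m w - chr g m 1 2 w * chr g l 2 m w)"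

definition gauss_curv :: "metric \<Rightarrow> complex \<Rightarrow> real" where
  "gauss_curv g w = (\<Sum>l\<in>{1,2}. g 1 l w * riem g l w) / detg g w"

section \<open>Immersion psi = (X, h) : Omega \<rightarrow> M^2 x R, with product metric\<close>

definition Ifund :: "metric \<Rightarrow> (complex \<Rightarrow> complex) \<Rightarrow> (complex \<Rightarrow> real) \<Rightarrow> complex \<Rightarrow> nat \<Rightarrow> nat \<Rightarrow> real" where
  "Ifund g X h z i j = gM g (X z) (pd i X z) (pd j X z) + pd i h z * pd j h z"

definition cov2 :: "metric \<Rightarrow> (complex \<Rightarrow> complex) \<Rightarrow> complex \<Rightarrow> nat \<Rightarrow> nat \<Rightarrow> complex" where
  "cov2 g X z i j =
     (let c = (\<lambda>k. coord k (pd i (pd j X) z)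
               + (\<Sum>a\<in>{1,2}. \<Sum>b\<in>{1,2}. chr g k a b (X z) * coord a (pd i X z) * coord b (pd j X z)))
      in Complex (c 1) (c 2))"

text \<open>Second fundamental form II_ij = <nabla_{d_i} dpsi(d_j), N>, N = (NM, nu).\<close>

definition IIfund :: "metric \<Rightarrow> (complex \<Rightarrow> complex) \<Rightarrow> (complex \<Rightarrow> real) \<Rightarrow> (complex \<Rightarrow> complex)
    \<Rightarrow> (complex \<Rightarrow> real) \<Rightarrow> complex \<Rightarrow> nat \<Rightarrow> nat \<Rightarrow> real" where
  "IIfund g X h NM \<nu> z i j = gM g (X z) (cov2 g X z i j) (NM z) + pd i (pd j h) z * \<nu> z"

definition qf :: "(nat \<Rightarrow> nat \<Rightarrow> real) \<Rightarrow> complex \<Rightarrow> real" where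
  "qf M a = (\<Sum>i\<in>{1,2}. \<Sum>j\<in>{1,2}. M i j * coord i a * coord j a)"

definition det2 :: "(nat \<Rightarrow> nat \<Rightarrow> real) \<Rightarrow> real" where
  "det2 M = M 1 1 * M 2 2 - M 1 2 * M 2 1"

definition ext_curv :: "(nat \<Rightarrow> nat \<Rightarrow> real) \<Rightarrow> (nat \<Rightarrow> nat \<Rightarrow> real) \<Rightarrow> real" where
  "ext_curv I II = det2 II / det2 I"

definition mean_curv :: "(nat \<Rightarrow> nat \<Rightarrow> real) \<Rightarrow> (nat \<Rightarrow> nat \<Rightarrow> real) \<Rightarrow> real" where
  "mean_curv I II = (I 2 2 * II 1 1 - I 1 2 * II 2 1 - I 2 1 * II 1 2 + I 1 1 * II 2 2) / (2 * det2 I)"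

text \<open>Laplacian of the metric II = 2 rho |dz|^2: (2/rho) d_z d_zbar.\<close>

definition lapII :: "(complex \<Rightarrow> real) \<Rightarrow> (complex \<Rightarrow> complex) \<Rightarrow> complex \<Rightarrow> complex" where
  "lapII \<rho> f z = 2 / complex_of_real (\<rho> z) * dz (dzb f) z"

end

theory Submission
  imports Defs
begin


definition edir :: "nat \<Rightarrow> complex" where
  "edir i = (if i = 1 then 1 else \<i>)"

lemma line_x_deriv:
  assumes "(f has_derivative f') (at w)"
  shows "((\<lambda>s. f (Complex s (Im w))) has_vector_derivative f' 1) (at (Re w))"
proof -
  have l: "((\<lambda>s. Complex s (Im w)) has_derivative (\<lambda>t. complex_of_real t)) (at (Re w))"
  proof -
    have e: "(\<lambda>s. Complex s (Im w)) = (\<lambda>s. complex_of_real s + Complex 0 (Im w))"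
      by (auto simp: complex_eq_iff)
    show ?thesis unfolding e
      using has_derivative_add[OF bounded_linear.has_derivative[OF bounded_linear_of_real has_derivative_ident] has_derivative_const] by simp
  qed
  have w: "Complex (Re w) (Im w) = w" by simp
  have "((f \<circ> (\<lambda>s. Complex s (Im w))) has_derivative (f' \<circ> complex_of_real)) (at (Re w))"
    using diff_chain_at[OF l] assms w by simp
  moreover have "(f' \<circ> complex_of_real) = (\<lambda>t. t *\<^sub>R f' 1)"
  proof
    fix t
    have "linear f'" using assms has_derivative_linear by blast
    then have "f' (t *\<^sub>R 1) = t *\<^sub>R f' 1" by (simp add: linear_scale)
    then show "(f' \<circ> complex_of_real) t = t *\<^sub>R f' 1" by (simp add: scaleR_conv_of_real)
  qed
  ultimately show ?thesis unfolding has_vector_derivative_def by (simp add: comp_def)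
qed

lemma line_y_deriv:
  assumes "(f has_derivative f') (at w)"
  shows "((\<lambda>s. f (Complex (Re w) s)) has_vector_derivative f' \<i>) (at (Im w))"
proof -
  have l: "((\<lambda>s. Complex (Re w) s) has_derivative (\<lambda>t. complex_of_real t * \<i>)) (at (Im w))"
  proof -
    have e: "(\<lambda>s. Complex (Re w) s) = (\<lambda>s. complex_of_real s * \<i> + complex_of_real (Re w))"
      by (auto simp: complex_eq_iff)
    show ?thesis unfolding e
      using has_derivative_add[OF has_derivative_mult_left[OF bounded_linear.has_derivative[OF bounded_linear_of_real has_derivative_ident], of \<i>] has_derivative_const] by simp
  qed
  have w: "Complex (Re w) (Im w) = w" by simp
  have "((f \<circ> (\<lambda>s. Complex (Re w) s)) has_derivative (f' \<circ> (\<lambda>t. complex_of_real t * \<i>))) (at (Im w))"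
    using diff_chain_at[OF l] assms w by simp
  moreover have "(f' \<circ> (\<lambda>t. complex_of_real t * \<i>)) = (\<lambda>t. t *\<^sub>R f' \<i>)"
  proof
    fix t
    have "linear f'" using assms has_derivative_linear by blast
    then have "f' (t *\<^sub>R \<i>) = t *\<^sub>R f' \<i>" by (simp add: linear_scale)
    then show "(f' \<circ> (\<lambda>t. complex_of_real t * \<i>)) t = t *\<^sub>R f' \<i>" by (simp add: scaleR_conv_of_real)
  qed
  ultimately show ?thesis unfolding has_vector_derivative_def by (simp add: comp_def)
qed

lemma pdx_eval: "(f has_derivative f') (at w) \<Longrightarrow> pdx f w = f' 1"
  unfolding pdx_def by (rule vector_derivative_at[OF line_x_deriv])

lemma pdy_eval: "(f has_derivative f') (at w) \<Longrightarrow> pdy f w = f' \<i>"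
  unfolding pdy_def by (rule vector_derivative_at[OF line_y_deriv])

lemma pd_eval: "(f has_derivative f') (at w) \<Longrightarrow> pd i f w = f' (edir i)"
  by (simp add: pd_def edir_def pdx_eval pdy_eval)

lemma pdx_local:
  assumes "open S" "w \<in> S" "\<And>v. v \<in> S \<Longrightarrow> f v = g v"
  shows "pdx f w = pdx g w"
proof -
  have o: "open ((\<lambda>s. Complex s (Im w)) -` S)"
    by (intro open_vimage assms continuous_intros) 
  have "\<And>D. ((\<lambda>s. f (Complex s (Im w))) has_vector_derivative D) (at (Re w)) \<longleftrightarrow>
             ((\<lambda>s. g (Complex s (Im w))) has_vector_derivative D) (at (Re w))"
    unfolding has_vector_derivative_def
  proof (intro iffI)
    have a: "Re w \<in> (\<lambda>s. Complex s (Im w)) -` S" using assms by simp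
    fix D
    { assume "((\<lambda>s. f (Complex s (Im w))) has_derivative (\<lambda>x. x *\<^sub>R D)) (at (Re w))"
      then show "((\<lambda>s. g (Complex s (Im w))) has_derivative (\<lambda>x. x *\<^sub>R D)) (at (Re w))"
        by (rule has_derivative_transform_within_open[OF _ o a]) (simp add: assms) }
    { assume "((\<lambda>s. g (Complex s (Im w))) has_derivative (\<lambda>x. x *\<^sub>R D)) (at (Re w))"
      then show "((\<lambda>s. f (Complex s (Im w))) has_derivative (\<lambda>x. x *\<^sub>R D)) (at (Re w))"
        by (rule has_derivative_transform_within_open[OF _ o a]) (simp add: assms) }
  qed
  then show ?thesis unfolding pdx_def vector_derivative_def by simp
qed

lemma pdy_local:
  assumes "open S" "w \<in> S" "\<And>v. v \<in> S \<Longrightarrow> f v = g v"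
  shows "pdy f w = pdy g w"
proof -
  have o: "open ((\<lambda>s. Complex (Re w) s) -` S)"
    by (intro open_vimage assms continuous_intros) 
  have "\<And>D. ((\<lambda>s. f (Complex (Re w) s)) has_vector_derivative D) (at (Im w)) \<longleftrightarrow>
             ((\<lambda>s. g (Complex (Re w) s)) has_vector_derivative D) (at (Im w))"
    unfolding has_vector_derivative_def
  proof (intro iffI)
    have a: "Im w \<in> (\<lambda>s. Complex (Re w) s) -` S" using assms by simp
    fix D
    { assume "((\<lambda>s. f (Complex (Re w) s)) has_derivative (\<lambda>x. x *\<^sub>R D)) (at (Im w))"
      then show "((\<lambda>s. g (Complex (Re w) s)) has_derivative (\<lambda>x. x *\<^sub>R D)) (at (Im w))"
        by (rule has_derivative_transform_within_open[OF _ o a]) (simp add: assms) }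
    { assume "((\<lambda>s. g (Complex (Re w) s)) has_derivative (\<lambda>x. x *\<^sub>R D)) (at (Im w))"
      then show "((\<lambda>s. f (Complex (Re w) s)) has_derivative (\<lambda>x. x *\<^sub>R D)) (at (Im w))"
        by (rule has_derivative_transform_within_open[OF _ o a]) (simp add: assms) }
  qed
  then show ?thesis unfolding pdy_def vector_derivative_def by simp
qed

lemma pd_local:
  assumes "open S" "w \<in> S" "\<And>v. v \<in> S \<Longrightarrow> f v = g v"
  shows "pd i f w = pd i g w"
  using pdx_local[OF assms] pdy_local[OF assms] by (simp add: pd_def)


lemma dx_line:
  fixes f :: "complex \<Rightarrow> real"
  assumes "f differentiable (at (Complex u c))"
  shows "((\<lambda>s. f (Complex s c)) has_real_derivative pdx f (Complex u c)) (at u)"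
proof -
  obtain D where D: "(f has_derivative D) (at (Complex u c))" using assms differentiable_def by blast
  have "((\<lambda>s. f (Complex s c)) has_vector_derivative D 1) (at u)"
    using line_x_deriv[OF D] by simp
  moreover have "pdx f (Complex u c) = D 1" using pdx_eval[OF D] .
  ultimately show ?thesis by (simp add: has_real_derivative_iff_has_vector_derivative)
qed

lemma dy_line:
  fixes f :: "complex \<Rightarrow> real"
  assumes "f differentiable (at (Complex c u))"
  shows "((\<lambda>s. f (Complex c s)) has_real_derivative pdy f (Complex c u)) (at u)"
proof -
  obtain D where D: "(f has_derivative D) (at (Complex c u))" using assms differentiable_def by blast
  have "((\<lambda>s. f (Complex c s)) has_vector_derivative D \<i>) (at u)"
    using line_y_deriv[OF D] by simp
  moreover have "pdy f (Complex c u) = D \<i>" using pdy_eval[OF D] .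
  ultimately show ?thesis by (simp add: has_real_derivative_iff_has_vector_derivative)
qed

lemma cmod_box: "\<bar>Re q\<bar> \<le> s \<Longrightarrow> \<bar>Im q\<bar> \<le> s \<Longrightarrow> cmod q \<le> 2 * s"
  using cmod_le[of q] by linarith

lemma schwarz_real:
  fixes f :: "complex \<Rightarrow> real"
  assumes S: "open S" "w \<in> S" and fd: "\<And>v. v \<in> S \<Longrightarrow> f differentiable (at v)"
    and pxd: "pdx f differentiable (at w)" and pyd: "pdy f differentiable (at w)"
  shows "pdy (pdx f) w = pdx (pdy f) w"
proof -
  obtain L1 where L1: "(pdx f has_derivative L1) (at w)" using pxd differentiable_def by blast
  obtain L2 where L2: "(pdy f has_derivative L2) (at w)" using pyd differentiable_def by blast
  define A where "A = L1 \<i>"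
  define B where "B = L2 1"
  have AA: "pdy (pdx f) w = A" using pdy_eval[OF L1] A_def by simp
  have BB: "pdx (pdy f) w = B" using pdx_eval[OF L2] B_def by simp
  have lin1: "linear L1" using L1 has_derivative_linear by blast
  have lin2: "linear L2" using L2 has_derivative_linear by blast
  define x0 where "x0 = Re w"
  define y0 where "y0 = Im w"
  have wxy: "w = Complex x0 y0" by (simp add: x0_def y0_def)
  have key: "\<bar>A - B\<bar> \<le> 8 * e" if e: "e > 0" for e
  proof -
    obtain d1 where d1: "d1 > 0" "\<And>y. cmod (y - w) < d1 \<Longrightarrow> \<bar>pdx f y - pdx f w - L1 (y - w)\<bar> \<le> e * cmod (y - w)"
      using L1[unfolded has_derivative_at_alt] e by (metis real_norm_def)
    obtain d2 where d2: "d2 > 0" "\<And>y. cmod (y - w) < d2 \<Longrightarrow> \<bar>pdy f y - pdy f w - L2 (y - w)\<bar> \<le> e * cmod (y - w)"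
      using L2[unfolded has_derivative_at_alt] e by (metis real_norm_def)
    obtain d0 where d0: "d0 > 0" "ball w d0 \<subseteq> S" using S open_contains_ball by blast
    define d where "d = min d0 (min d1 d2)"
    define s where "s = d / 3"
    have dpos: "d > 0" using d0 d1 d2 by (simp add: d_def)
    have spos: "s > 0" using dpos by (simp add: s_def)
    have near: "cmod (q - w) < d" if "\<bar>Re q - x0\<bar> \<le> s" "\<bar>Im q - y0\<bar> \<le> s" for q
    proof -
      have "cmod (q - w) \<le> 2 * s" using cmod_box[of "q - w" s] that by (simp add: x0_def y0_def)
      then show ?thesis using spos by (simp add: s_def)
    qed
    have inS: "q \<in> S" if "\<bar>Re q - x0\<bar> \<le> s" "\<bar>Im q - y0\<bar> \<le> s" for q
    proof -
      have "cmod (q - w) < d0" using near[OF that] by (simp add: d_def)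
      then show ?thesis using d0(2) by (auto simp: dist_norm norm_minus_commute)
    qed
    have n1: "\<bar>pdx f q - pdx f w - L1 (q - w)\<bar> \<le> e * (2 * s)" if "\<bar>Re q - x0\<bar> \<le> s" "\<bar>Im q - y0\<bar> \<le> s" for q
    proof -
      have c: "cmod (q - w) \<le> 2 * s" using cmod_box[of "q - w" s] that by (simp add: x0_def y0_def)
      have "cmod (q - w) < d1" using near[OF that] by (simp add: d_def)
      then have "\<bar>pdx f q - pdx f w - L1 (q - w)\<bar> \<le> e * cmod (q - w)" by (rule d1(2))
      also have "\<dots> \<le> e * (2 * s)" using c e by (simp add: mult_left_mono)
      finally show ?thesis .
    qed
    have n2: "\<bar>pdy f q - pdy f w - L2 (q - w)\<bar> \<le> e * (2 * s)" if "\<bar>Re q - x0\<bar> \<le> s" "\<bar>Im q - y0\<bar> \<le> s" for q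
    proof -
      have c: "cmod (q - w) \<le> 2 * s" using cmod_box[of "q - w" s] that by (simp add: x0_def y0_def)
      have "cmod (q - w) < d2" using near[OF that] by (simp add: d_def)
      then have "\<bar>pdy f q - pdy f w - L2 (q - w)\<bar> \<le> e * cmod (q - w)" by (rule d2(2))
      also have "\<dots> \<le> e * (2 * s)" using c e by (simp add: mult_left_mono)
      finally show ?thesis .
    qed
    define \<Delta> where "\<Delta> = f (Complex (x0+s) (y0+s)) - f (Complex (x0+s) y0) - f (Complex x0 (y0+s)) + f (Complex x0 y0)"
    have "\<exists>\<xi>. x0 < \<xi> \<and> \<xi> < x0 + s \<and>
      (f (Complex (x0+s) (y0+s)) - f (Complex (x0+s) y0)) - (f (Complex x0 (y0+s)) - f (Complex x0 y0))
       = ((x0 + s) - x0) * (pdx f (Complex \<xi> (y0+s)) - pdx f (Complex \<xi> y0))"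
    proof (rule MVT2[where f = "\<lambda>u. f (Complex u (y0+s)) - f (Complex u y0)"])
      show "x0 < x0 + s" using spos by simp
      fix u assume u: "x0 \<le> u" "u \<le> x0 + s"
      have "Complex u (y0+s) \<in> S" by (rule inS) (use u spos in auto)
      moreover have "Complex u y0 \<in> S" by (rule inS) (use u spos in auto)
      ultimately show "((\<lambda>u. f (Complex u (y0 + s)) - f (Complex u y0)) has_real_derivative
          pdx f (Complex u (y0 + s)) - pdx f (Complex u y0)) (at u)"
        using dx_line fd by (intro DERIV_diff) auto
    qed
    then obtain \<xi> where xi: "x0 < \<xi>" "\<xi> < x0 + s"
      "\<Delta> = s * (pdx f (Complex \<xi> (y0+s)) - pdx f (Complex \<xi> y0))"
      unfolding \<Delta>_def by (auto simp: algebra_simps)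
    have q1: "\<bar>pdx f (Complex \<xi> (y0+s)) - pdx f w - L1 (Complex \<xi> (y0+s) - w)\<bar> \<le> e * (2 * s)"
      by (rule n1) (use xi spos in auto)
    have q2: "\<bar>pdx f (Complex \<xi> y0) - pdx f w - L1 (Complex \<xi> y0 - w)\<bar> \<le> e * (2 * s)"
      by (rule n1) (use xi spos in auto)
    have lq: "L1 (Complex \<xi> (y0+s) - w) - L1 (Complex \<xi> y0 - w) = s * A"
    proof -
      have "L1 (Complex \<xi> (y0+s) - w) - L1 (Complex \<xi> y0 - w) = L1 ((Complex \<xi> (y0+s) - w) - (Complex \<xi> y0 - w))"
        using lin1 by (simp add: linear_diff)
      also have "(Complex \<xi> (y0+s) - w) - (Complex \<xi> y0 - w) = s *\<^sub>R \<i>" by (simp add: complex_eq_iff)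
      also have "L1 (s *\<^sub>R \<i>) = s * A" using lin1 by (simp add: linear_scale A_def)
      finally show ?thesis .
    qed
    have bA: "\<bar>\<Delta> - s * s * A\<bar> \<le> 4 * e * (s * s)"
    proof -
      have "\<bar>(pdx f (Complex \<xi> (y0+s)) - pdx f (Complex \<xi> y0)) - s * A\<bar> \<le> 4 * e * s"
        using q1 q2 lq by (simp add: abs_le_iff)
      then have "\<bar>s * ((pdx f (Complex \<xi> (y0+s)) - pdx f (Complex \<xi> y0)) - s * A)\<bar> \<le> s * (4 * e * s)"
        using spos by (simp add: abs_mult mult_left_mono)
      then show ?thesis using xi(3) by (simp add: algebra_simps)
    qed
    have "\<exists>\<eta>. y0 < \<eta> \<and> \<eta> < y0 + s \<and>
      (f (Complex (x0+s) (y0+s)) - f (Complex x0 (y0+s))) - (f (Complex (x0+s) y0) - f (Complex x0 y0))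
       = ((y0 + s) - y0) * (pdy f (Complex (x0+s) \<eta>) - pdy f (Complex x0 \<eta>))"
    proof (rule MVT2[where f = "\<lambda>u. f (Complex (x0+s) u) - f (Complex x0 u)"])
      show "y0 < y0 + s" using spos by simp
      fix u assume u: "y0 \<le> u" "u \<le> y0 + s"
      have "Complex (x0+s) u \<in> S" by (rule inS) (use u spos in auto)
      moreover have "Complex x0 u \<in> S" by (rule inS) (use u spos in auto)
      ultimately show "((\<lambda>u. f (Complex (x0 + s) u) - f (Complex x0 u)) has_real_derivative
          pdy f (Complex (x0 + s) u) - pdy f (Complex x0 u)) (at u)"
        using dy_line fd by (intro DERIV_diff) auto
    qed
    then obtain \<eta> where eta: "y0 < \<eta>" "\<eta> < y0 + s"
      "\<Delta> = s * (pdy f (Complex (x0+s) \<eta>) - pdy f (Complex x0 \<eta>))"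
      unfolding \<Delta>_def by (auto simp: algebra_simps)
    have r1: "\<bar>pdy f (Complex (x0+s) \<eta>) - pdy f w - L2 (Complex (x0+s) \<eta> - w)\<bar> \<le> e * (2 * s)"
      by (rule n2) (use eta spos in auto)
    have r2: "\<bar>pdy f (Complex x0 \<eta>) - pdy f w - L2 (Complex x0 \<eta> - w)\<bar> \<le> e * (2 * s)"
      by (rule n2) (use eta spos in auto)
    have lr: "L2 (Complex (x0+s) \<eta> - w) - L2 (Complex x0 \<eta> - w) = s * B"
    proof -
      have "L2 (Complex (x0+s) \<eta> - w) - L2 (Complex x0 \<eta> - w) = L2 ((Complex (x0+s) \<eta> - w) - (Complex x0 \<eta> - w))"
        using lin2 by (simp add: linear_diff)
      also have "(Complex (x0+s) \<eta> - w) - (Complex x0 \<eta> - w) = s *\<^sub>R 1" by (simp add: complex_eq_iff)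
      also have "L2 (s *\<^sub>R 1) = s * B" using lin2 by (simp add: linear_scale B_def)
      finally show ?thesis .
    qed
    have bB: "\<bar>\<Delta> - s * s * B\<bar> \<le> 4 * e * (s * s)"
    proof -
      have "\<bar>(pdy f (Complex (x0+s) \<eta>) - pdy f (Complex x0 \<eta>)) - s * B\<bar> \<le> 4 * e * s"
        using r1 r2 lr by (simp add: abs_le_iff)
      then have "\<bar>s * ((pdy f (Complex (x0+s) \<eta>) - pdy f (Complex x0 \<eta>)) - s * B)\<bar> \<le> s * (4 * e * s)"
        using spos by (simp add: abs_mult mult_left_mono)
      then show ?thesis using eta(3) by (simp add: algebra_simps)
    qed
    have "\<bar>(s * s) * (A - B)\<bar> \<le> (s * s) * (8 * e)"
      using bA bB by (simp add: abs_le_iff algebra_simps)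
    then have "(s * s) * \<bar>A - B\<bar> \<le> (s * s) * (8 * e)" by (simp add: abs_mult)
    moreover have "s * s > 0" using spos by simp
    ultimately show ?thesis using mult_le_cancel_left_pos by blast
  qed
  have "A = B"
  proof (rule ccontr)
    assume "A \<noteq> B"
    then have "\<bar>A - B\<bar> > 0" by simp
    then have "\<bar>A - B\<bar> \<le> 8 * (\<bar>A - B\<bar> / 16)" using key[of "\<bar>A - B\<bar> / 16"] by simp
    then show False using \<open>\<bar>A - B\<bar> > 0\<close> by simp
  qed
  then show ?thesis using AA BB by simp
qed


lemma edir_simps[simp]: "edir 1 = 1" "edir (Suc 0) = 1" "edir 2 = \<i>"
  by (simp_all add: edir_def)

lemma pd_i_simps: "pd 1 f = pdx f" "pd 2 f = pdy f"
  by (simp_all add: pd_def)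

lemma diff_local:
  assumes "f differentiable (at w)" "open S" "w \<in> S" "\<And>v. v \<in> S \<Longrightarrow> f v = g v"
  shows "g differentiable (at w)"
  using assms has_derivative_transform_within_open unfolding differentiable_def by blast

lemma pd_mult:
  fixes f g :: "complex \<Rightarrow> 'b::real_normed_algebra"
  assumes "f differentiable (at w)" "g differentiable (at w)"
  shows "pd i (\<lambda>v. f v * g v) w = f w * pd i g w + pd i f w * g w"
proof -
  obtain Df where Df: "(f has_derivative Df) (at w)" using assms differentiable_def by blast
  obtain Dg where Dg: "(g has_derivative Dg) (at w)" using assms differentiable_def by blast
  show ?thesis using pd_eval[OF has_derivative_mult[OF Df Dg]] pd_eval[OF Df] pd_eval[OF Dg] by simp
qed

lemma pd_add:
  fixes f g :: "complex \<Rightarrow> 'b::real_normed_vector"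
  assumes "f differentiable (at w)" "g differentiable (at w)"
  shows "pd i (\<lambda>v. f v + g v) w = pd i f w + pd i g w"
proof -
  obtain Df where Df: "(f has_derivative Df) (at w)" using assms differentiable_def by blast
  obtain Dg where Dg: "(g has_derivative Dg) (at w)" using assms differentiable_def by blast
  show ?thesis using pd_eval[OF has_derivative_add[OF Df Dg]] pd_eval[OF Df] pd_eval[OF Dg] by simp
qed

lemma pd_diff:
  fixes f g :: "complex \<Rightarrow> 'b::real_normed_vector"
  assumes "f differentiable (at w)" "g differentiable (at w)"
  shows "pd i (\<lambda>v. f v - g v) w = pd i f w - pd i g w"
proof -
  obtain Df where Df: "(f has_derivative Df) (at w)" using assms differentiable_def by blast
  obtain Dg where Dg: "(g has_derivative Dg) (at w)" using assms differentiable_def by blast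
  show ?thesis using pd_eval[OF has_derivative_diff[OF Df Dg]] pd_eval[OF Df] pd_eval[OF Dg] by simp
qed

lemma pd_const: "pd i (\<lambda>v. (c::'b::real_normed_vector)) w = 0"
proof -
  have "((\<lambda>v::complex. c) has_derivative (\<lambda>h. 0)) (at w)" by (rule has_derivative_const)
  from pd_eval[OF this] show ?thesis by simp
qed

lemma pd_cmult:
  fixes f :: "complex \<Rightarrow> 'b::real_normed_algebra"
  assumes "f differentiable (at w)"
  shows "pd i (\<lambda>v. c * f v) w = c * pd i f w"
proof -
  have "pd i (\<lambda>v. c * f v) w = c * pd i f w + pd i (\<lambda>v. c) w * f w"
    by (rule pd_mult[OF differentiable_const assms])
  then show ?thesis by (simp add: pd_const)
qed

lemma pd_comp:
  fixes \<phi> :: "complex \<Rightarrow> real" and X :: "complex \<Rightarrow> complex"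
  assumes "\<phi> differentiable (at (X w))" "X differentiable (at w)"
  shows "pd i (\<lambda>v. \<phi> (X v)) w = pd 1 \<phi> (X w) * Re (pd i X w) + pd 2 \<phi> (X w) * Im (pd i X w)"
proof -
  obtain Dp where Dp: "(\<phi> has_derivative Dp) (at (X w))" using assms differentiable_def by blast
  obtain DX where DX: "(X has_derivative DX) (at w)" using assms differentiable_def by blast
  have c: "((\<phi> \<circ> X) has_derivative (Dp \<circ> DX)) (at w)" by (rule diff_chain_at[OF DX Dp])
  have lin: "linear Dp" using Dp has_derivative_linear by blast
  have "Dp v = Re v * Dp 1 + Im v * Dp \<i>" for v
  proof -
    have "v = Re v *\<^sub>R 1 + Im v *\<^sub>R \<i>" by (simp add: complex_eq_iff)
    then have "Dp v = Dp (Re v *\<^sub>R 1 + Im v *\<^sub>R \<i>)" by simp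
    also have "\<dots> = Re v * Dp 1 + Im v * Dp \<i>" using lin by (simp add: linear_add linear_scale)
    finally show ?thesis .
  qed
  from this[of "DX (edir i)"] show ?thesis
    using pd_eval[OF c, of i] pd_eval[OF DX, of i] pd_eval[OF Dp, of 1] pd_eval[OF Dp, of 2]
    by (simp add: comp_def mult.commute)
qed

lemma pd_Re:
  fixes X :: "complex \<Rightarrow> complex"
  assumes "X differentiable (at w)"
  shows "pd i (\<lambda>v. Re (X v)) w = Re (pd i X w)"
proof -
  obtain DX where DX: "(X has_derivative DX) (at w)" using assms differentiable_def by blast
  have "((\<lambda>v. Re (X v)) has_derivative (\<lambda>h. Re (DX h))) (at w)"
    by (rule bounded_linear.has_derivative[OF bounded_linear_Re DX])
  from pd_eval[OF this, of i] pd_eval[OF DX, of i] show ?thesis by simp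
qed

lemma pd_Im:
  fixes X :: "complex \<Rightarrow> complex"
  assumes "X differentiable (at w)"
  shows "pd i (\<lambda>v. Im (X v)) w = Im (pd i X w)"
proof -
  obtain DX where DX: "(X has_derivative DX) (at w)" using assms differentiable_def by blast
  have "((\<lambda>v. Im (X v)) has_derivative (\<lambda>h. Im (DX h))) (at w)"
    by (rule bounded_linear.has_derivative[OF bounded_linear_Im DX])
  from pd_eval[OF this, of i] pd_eval[OF DX, of i] show ?thesis by simp
qed

lemma pd_coord:
  fixes X :: "complex \<Rightarrow> complex"
  assumes "X differentiable (at w)"
  shows "pd i (\<lambda>v. coord a (X v)) w = coord a (pd i X w)"
  using pd_Re[OF assms] pd_Im[OF assms] by (simp add: coord_def)

lemma pd_ofreal:
  fixes f :: "complex \<Rightarrow> real"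
  assumes "f differentiable (at w)"
  shows "pd i (\<lambda>v. complex_of_real (f v)) w = complex_of_real (pd i f w)"
proof -
  obtain D where D: "(f has_derivative D) (at w)" using assms differentiable_def by blast
  have "((\<lambda>v. complex_of_real (f v)) has_derivative (\<lambda>h. complex_of_real (D h))) (at w)"
    by (rule bounded_linear.has_derivative[OF bounded_linear_of_real D])
  from pd_eval[OF this, of i] pd_eval[OF D, of i] show ?thesis by simp
qed

lemma coord_diff: "X differentiable (at w) \<Longrightarrow> (\<lambda>v. coord a (X v)) differentiable (at w)"
  unfolding coord_def
  using differentiable_compose[where f=Re, OF bounded_linear_imp_differentiable[OF bounded_linear_Re]]
    differentiable_compose[where f=Im, OF bounded_linear_imp_differentiable[OF bounded_linear_Im]]
  by (cases "a = 1") auto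

lemma smooth_iter: "smooth_on S f \<Longrightarrow> w \<in> S \<Longrightarrow> iter_pd bs f differentiable (at w)"
  by (simp add: smooth_on_def)

lemma smooth_d0: "smooth_on S f \<Longrightarrow> w \<in> S \<Longrightarrow> f differentiable (at w)"
  using smooth_iter[of S f w "[]"] by simp

lemma iter_pd_append: "iter_pd bs (pd i f) = iter_pd (bs @ [i = 1]) f"
  by (induction bs) (auto simp: pd_def)

lemma smooth_pd: "smooth_on S f \<Longrightarrow> smooth_on S (pd i f)"
  unfolding smooth_on_def by (simp add: iter_pd_append)

lemma smooth_d1: "smooth_on S f \<Longrightarrow> w \<in> S \<Longrightarrow> pd i f differentiable (at w)"
  using smooth_d0 smooth_pd by blast

lemma smooth_d2: "smooth_on S f \<Longrightarrow> w \<in> S \<Longrightarrow> pd i (pd j f) differentiable (at w)"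
  using smooth_d0 smooth_pd by blast

lemma smooth_d3: "smooth_on S f \<Longrightarrow> w \<in> S \<Longrightarrow> pd i (pd j (pd k f)) differentiable (at w)"
  using smooth_d0 smooth_pd by blast

lemma smooth_coord:
  assumes "smooth_on S X" "open S"
  shows "smooth_on S (\<lambda>v. coord a (X v))"
proof -
  have eq: "\<forall>v\<in>S. iter_pd bs (\<lambda>v. coord a (X v)) v = coord a (iter_pd bs X v)" for bs
  proof (induction bs)
    case Nil then show ?case by simp
  next
    case (Cons b bs)
    show ?case
    proof
      fix v assume v: "v \<in> S"
      have d: "iter_pd bs X differentiable (at v)" using smooth_iter[OF assms(1) v] .
      have "pd (if b then 1 else 2) (iter_pd bs (\<lambda>v. coord a (X v))) v
            = pd (if b then 1 else 2) (\<lambda>u. coord a (iter_pd bs X u)) v"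
        by (rule pd_local[OF assms(2) v]) (use Cons in auto)
      also have "\<dots> = coord a (pd (if b then 1 else 2) (iter_pd bs X) v)" by (rule pd_coord[OF d])
      finally show "iter_pd (b # bs) (\<lambda>v. coord a (X v)) v = coord a (iter_pd (b # bs) X v)"
        by (cases b) (simp_all add: pd_def)
    qed
  qed
  show ?thesis unfolding smooth_on_def
  proof (intro allI ballI)
    fix bs v assume v: "v \<in> S"
    have "(\<lambda>u. coord a (iter_pd bs X u)) differentiable (at v)"
      by (rule coord_diff[OF smooth_iter[OF assms(1) v]])
    then show "iter_pd bs (\<lambda>v. coord a (X v)) differentiable (at v)"
      by (rule diff_local[OF _ assms(2) v]) (use eq in auto)
  qed
qed

lemma schwarz_smooth:
  fixes f :: "complex \<Rightarrow> real"
  assumes "smooth_on S f" "open S" "w \<in> S"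
  shows "pd i (pd j f) w = pd j (pd i f) w"
proof -
  have "pdy (pdx f) w = pdx (pdy f) w"
  proof (rule schwarz_real[OF assms(2,3)])
    show "\<And>v. v \<in> S \<Longrightarrow> f differentiable at v" using smooth_d0[OF assms(1)] .
    show "pdx f differentiable at w" using smooth_d1[OF assms(1,3), of 1] by (simp add: pd_def)
    show "pdy f differentiable at w" using smooth_d1[OF assms(1,3), of 2] by (simp add: pd_def)
  qed
  then show ?thesis by (auto simp: pd_def)
qed

lemma schwarz_smooth_c:
  fixes X :: "complex \<Rightarrow> complex"
  assumes "smooth_on S X" "open S" "w \<in> S"
  shows "pd i (pd j X) w = pd j (pd i X) w"
proof -
  have c: "coord a (pd i (pd j X) w) = pd i (pd j (\<lambda>v. coord a (X v))) w" for a i j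
  proof -
    have "coord a (pd i (pd j X) w) = pd i (\<lambda>v. coord a (pd j X v)) w"
      by (rule pd_coord[symmetric]) (rule smooth_d1[OF assms(1,3)])
    also have "\<dots> = pd i (pd j (\<lambda>v. coord a (X v))) w"
      by (rule pd_local[OF assms(2,3)]) (rule pd_coord[symmetric], rule smooth_d0[OF assms(1)])
    finally show ?thesis .
  qed
  have "coord a (pd i (pd j X) w) = coord a (pd j (pd i X) w)" for a
    using c[of a i j] c[of a j i] schwarz_smooth[OF smooth_coord[OF assms(1,2), of a] assms(2,3), of i j] by simp
  from this[of 1] this[of 2] show ?thesis by (simp add: coord_def complex_eq_iff)
qed


lemma sum12: "(\<Sum>x\<in>{1::nat,2}. f x) = f 1 + f 2"
  by simp

locale metric_loc =
  fixes g :: metric and U :: "complex set"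
  assumes U_open: "open U"
    and g_smooth: "\<forall>i\<in>{1,2}. \<forall>j\<in>{1,2}. smooth_on U (g i j)"
    and g_sym: "\<forall>w\<in>U. g 1 2 w = g 2 1 w"
    and g_posdef: "\<forall>w\<in>U. g 1 1 w > 0 \<and> detg g w > 0"
begin

lemma gs: "a \<in> {1,2} \<Longrightarrow> b \<in> {1,2} \<Longrightarrow> smooth_on U (g a b)"
  using g_smooth by blast

lemma g_pd_sym: "w \<in> U \<Longrightarrow> pd c (g 1 2) w = pd c (g 2 1) w"
  by (rule pd_local[OF U_open]) (use g_sym in auto)

lemma det_nz: "w \<in> U \<Longrightarrow> detg g w \<noteq> 0"
  using g_posdef by force

lemma gi: "ginv g 1 1 w = g 2 2 w / detg g w" "ginv g 2 2 w = g 1 1 w / detg g w"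
  "ginv g 1 2 w = - g 1 2 w / detg g w" "ginv g 2 1 w = - g 2 1 w / detg g w"
  by (simp_all add: ginv_def)

lemma compat:
  assumes w: "w \<in> U" and abc: "a \<in> {1,2}" "b \<in> {1,2}" "c \<in> {1,2}"
  shows "pd c (g a b) w = (\<Sum>m\<in>{1,2}. g m b w * chr g m c a w + g a m w * chr g m c b w)"
proof -
  have s: "g 2 1 w = g 1 2 w" using g_sym w by simp
  have d: "detg g w \<noteq> 0" using det_nz w by simp
  have ps: "pd k (g 2 1) w = pd k (g 1 2) w" for k using g_pd_sym w by simp
  from abc have "a = 1 \<or> a = 2" "b = 1 \<or> b = 2" "c = 1 \<or> c = 2" by auto
  then show ?thesis
    apply (elim disjE)
    apply (simp_all only: chr_def sum12 gi s ps)
    apply (simp_all add: field_simps d)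
    apply (simp_all only: detg_def s)
    apply (simp_all add: algebra_simps)
    done
qed

lemma chr_sym:
  assumes w: "w \<in> U" and ab: "a \<in> {1,2}" "b \<in> {1,2}"
  shows "chr g k a b w = chr g k b a w"
proof -
  have ps: "pd k (g 2 1) w = pd k (g 1 2) w" for k using g_pd_sym w by simp
  from ab have "a = 1 \<or> a = 2" "b = 1 \<or> b = 2" by auto
  then show ?thesis
    apply (elim disjE)
    apply (simp_all only: chr_def sum12 ps)
    apply (simp_all add: algebra_simps)
    done
qed

lemma g_diff: "w \<in> U \<Longrightarrow> a \<in> {1,2} \<Longrightarrow> b \<in> {1,2} \<Longrightarrow> g a b differentiable (at w)"
  using smooth_d0 gs by blast

lemma g_diff1: "w \<in> U \<Longrightarrow> a \<in> {1,2} \<Longrightarrow> b \<in> {1,2} \<Longrightarrow> pd c (g a b) differentiable (at w)"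
  using smooth_d1 gs by blast

lemma detg_diff: "w \<in> U \<Longrightarrow> detg g differentiable (at w)"
proof -
  assume w: "w \<in> U"
  have e: "detg g = (\<lambda>v. g 1 1 v * g 2 2 v - g 1 2 v * g 2 1 v)" by (simp add: detg_def[abs_def])
  show ?thesis unfolding e using g_diff[OF w] by (intro differentiable_diff differentiable_mult) auto
qed

lemma ginv_diff:
  assumes w: "w \<in> U" and kl: "k \<in> {1,2}" "l \<in> {1,2}"
  shows "ginv g k l differentiable (at w)"
proof -
  have dn: "detg g w \<noteq> 0" using det_nz w .
  have dd: "detg g differentiable (at w)" using detg_diff w .
  have q: "(\<lambda>v. f v / detg g v) differentiable (at w)" if "f differentiable (at w)" for f
    using that dd dn by (intro differentiable_divide) auto
  from kl have "k = 1 \<or> k = 2" "l = 1 \<or> l = 2" by auto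
  then show ?thesis
    apply (elim disjE)
    apply (simp_all add: ginv_def[abs_def])
    apply (auto intro!: q differentiable_minus g_diff w)
    done
qed

lemma pd_sum12:
  fixes F :: "nat \<Rightarrow> complex \<Rightarrow> real"
  assumes "F 1 differentiable (at w)" "F 2 differentiable (at w)"
  shows "pd a (\<lambda>v. \<Sum>m\<in>{1,2}. F m v) w = (\<Sum>m\<in>{1,2}. pd a (F m) w)"
  using pd_add[OF assms, of a] by (simp add: sum12)

lemma chr_diff:
  assumes w: "w \<in> U" and kij: "k \<in> {1,2}" "i \<in> {1,2}" "j \<in> {1,2}"
  shows "chr g k i j differentiable (at w)"
proof -
  have e: "chr g k i j = (\<lambda>v. 1/2 * (ginv g k 1 v * (pd i (g j 1) v + pd j (g i 1) v - pd 1 (g i j) v)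
      + ginv g k 2 v * (pd i (g j 2) v + pd j (g i 2) v - pd 2 (g i j) v)))"
    by (simp add: chr_def[abs_def] sum12)
  show ?thesis unfolding e using kij
    by (intro differentiable_mult differentiable_add differentiable_diff differentiable_const
        ginv_diff[OF w] g_diff1[OF w]) auto
qed

end

definition Rc :: "metric \<Rightarrow> nat \<Rightarrow> nat \<Rightarrow> nat \<Rightarrow> nat \<Rightarrow> complex \<Rightarrow> real" where
  "Rc g k l a b w = pd a (chr g k b l) w - pd b (chr g k a l) w
     + (\<Sum>m\<in>{1,2}. chr g k a m w * chr g m b l w - chr g k b m w * chr g m a l w)"

lemma riem_Rc: "riem g l w = Rc g l 2 1 2 w"
  by (simp add: riem_def Rc_def sum12 algebra_simps)

context metric_loc
begin

lemma antisym:
  assumes w: "w \<in> U" and kl: "k \<in> {1,2}" "l \<in> {1,2}"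
  shows "(\<Sum>m\<in>{1,2}. g k m w * Rc g m l 1 2 w) + (\<Sum>m\<in>{1,2}. g l m w * Rc g m k 1 2 w) = 0"
proof -
  define H where "H b v = (\<Sum>m\<in>{1,2}. g m l v * chr g m b k v + g k m v * chr g m b l v)" for b v
  have pdH: "pd a (pd b (g k l)) w = (\<Sum>m\<in>{1,2}. g m l w * pd a (chr g m b k) w + pd a (g m l) w * chr g m b k w
          + (g k m w * pd a (chr g m b l) w + pd a (g k m) w * chr g m b l w))"
    if b: "b \<in> {1,2}" for a b
  proof -
    have "pd a (pd b (g k l)) w = pd a (H b) w"
      by (rule pd_local[OF U_open w]) (unfold H_def, rule compat[OF _ kl b], assumption)
    also have "\<dots> = (\<Sum>m\<in>{1,2}. pd a (\<lambda>v. g m l v * chr g m b k v + g k m v * chr g m b l v) w)"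
      unfolding H_def[abs_def] using kl b
      by (intro pd_sum12) (auto intro!: differentiable_add differentiable_mult g_diff w chr_diff)
    also have "\<dots> = (\<Sum>m\<in>{1,2}. g m l w * pd a (chr g m b k) w + pd a (g m l) w * chr g m b k w
          + (g k m w * pd a (chr g m b l) w + pd a (g k m) w * chr g m b l w))"
      using kl b
      by (intro sum.cong refl, subst pd_add)
         (auto intro!: differentiable_add differentiable_mult g_diff w chr_diff simp: pd_mult g_diff chr_diff w)
    finally show ?thesis .
  qed
  have sw: "pd 1 (pd 2 (g k l)) w = pd 2 (pd 1 (g k l)) w"
    using schwarz_smooth[OF gs[OF kl] U_open w] .
  have cs: "\<And>m c. c \<in> {1,2} \<Longrightarrow> chr g m c 1 w = chr g m 1 c w" using chr_sym[OF w] by auto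
  have cps: "pd a (chr g m 2 1) w = pd a (chr g m 1 2) w" for a m
    by (rule pd_local[OF U_open w]) (simp add: chr_sym)
  have s: "g 2 1 w = g 1 2 w" using g_sym w by simp
  have c1: "pd a (g m n) w = (\<Sum>p\<in>{1,2}. g p n w * chr g p a m w + g m p w * chr g p a n w)"
    if "a \<in> {1,2}" "m \<in> {1,2}" "n \<in> {1,2}" for a m n
    using compat[OF w that(2,3,1)] .
  have cs21: "chr g p 2 1 w = chr g p 1 2 w" for p using chr_sym[OF w] by simp
  have eq: "(\<Sum>m\<in>{1,2}. g m l w * pd 1 (chr g m 2 k) w + pd 1 (g m l) w * chr g m 2 k w
          + (g k m w * pd 1 (chr g m 2 l) w + pd 1 (g k m) w * chr g m 2 l w))
        = (\<Sum>m\<in>{1,2}. g m l w * pd 2 (chr g m 1 k) w + pd 2 (g m l) w * chr g m 1 k w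
          + (g k m w * pd 2 (chr g m 1 l) w + pd 2 (g k m) w * chr g m 1 l w))"
    using pdH[of 2 1] pdH[of 1 2] sw by simp
  from kl have "k = 1 \<or> k = 2" "l = 1 \<or> l = 2" by auto
  then show ?thesis using eq
    apply (elim disjE)
    apply (simp_all only: sum12 c1 Rc_def cps s cs21 insert_iff singleton_iff refl simp_thms)
    apply (simp_all add: algebra_simps)
    done
qed

lemma curv_formula:
  assumes w: "w \<in> U"
  shows "(\<Sum>k\<in>{1,2}. \<Sum>j\<in>{1,2}. g k j w *
           (\<Sum>a\<in>{1,2}. \<Sum>b\<in>{1,2}. \<Sum>l\<in>{1,2}. coord a u * coord b u2 * coord l v * Rc g k l a b w) * coord j y)
       = gauss_curv g w * (gM g w u2 v * gM g w u y - gM g w u v * gM g w u2 y)"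
proof -
  have s: "g 2 1 w = g 1 2 w" using g_sym w by simp
  have dn: "detg g w \<noteq> 0" using det_nz w .
  have r0: "Rc g k l a a w = 0" for k l a by (simp add: Rc_def)
  have r21: "Rc g k l 2 1 w = - Rc g k l 1 2 w" for k l by (simp add: Rc_def sum12 algebra_simps)
  define A11 where "A11 = Rc g 1 1 1 2 w"
  define A12 where "A12 = Rc g 1 2 1 2 w"
  define A21 where "A21 = Rc g 2 1 1 2 w"
  define A22 where "A22 = Rc g 2 2 1 2 w"
  define g11 where "g11 = g 1 1 w"
  define g12 where "g12 = g 1 2 w"
  define g22 where "g22 = g 2 2 w"
  have e1: "g11 * A11 + g12 * A21 = 0"
    using antisym[OF w, of 1 1] by (simp only: sum12 A11_def[symmetric] A12_def[symmetric] A21_def[symmetric] A22_def[symmetric] g11_def[symmetric] g12_def[symmetric] g22_def[symmetric] insert_iff simp_thms, (simp add: algebra_simps)?)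
  have e2: "g12 * A12 + g22 * A22 = 0"
    using antisym[OF w, of 2 2] by (simp only: sum12 s A11_def[symmetric] A12_def[symmetric] A21_def[symmetric] A22_def[symmetric] g11_def[symmetric] g12_def[symmetric] g22_def[symmetric] insert_iff simp_thms, (simp add: algebra_simps)?)
  have e3: "(g11 * A12 + g12 * A22) + (g12 * A11 + g22 * A21) = 0"
    using antisym[OF w, of 1 2] by (simp only: sum12 s A11_def[symmetric] A12_def[symmetric] A21_def[symmetric] A22_def[symmetric] g11_def[symmetric] g12_def[symmetric] g22_def[symmetric] insert_iff simp_thms, (simp add: algebra_simps)?)
  define B where "B = g11 * A12 + g12 * A22"
  have dt: "detg g w = g11 * g22 - g12 * g12" by (simp only: detg_def s A11_def[symmetric] A12_def[symmetric] A21_def[symmetric] A22_def[symmetric] g11_def[symmetric] g12_def[symmetric] g22_def[symmetric])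
  have kap: "gauss_curv g w = B / detg g w"
    by (simp only: gauss_curv_def sum12 riem_Rc B_def A11_def[symmetric] A12_def[symmetric] A21_def[symmetric] A22_def[symmetric] g11_def[symmetric] g12_def[symmetric] g22_def[symmetric])
  define u1 where "u1 = coord 1 u"
  define u2' where "u2' = coord 2 u"
  define w1 where "w1 = coord 1 u2"
  define w2 where "w2 = coord 2 u2"
  define v1 where "v1 = coord 1 v"
  define v2 where "v2 = coord 2 v"
  define y1 where "y1 = coord 1 y"
  define y2 where "y2 = coord 2 y"
  have L: "(\<Sum>k\<in>{1,2}. \<Sum>j\<in>{1,2}. g k j w *
           (\<Sum>a\<in>{1,2}. \<Sum>b\<in>{1,2}. \<Sum>l\<in>{1,2}. coord a u * coord b u2 * coord l v * Rc g k l a b w) * coord j y)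
       = (u1 * w2 - u2' * w1) * (y1 * v1 * (g11 * A11 + g12 * A21) + y1 * v2 * (g11 * A12 + g12 * A22)
            + y2 * v1 * (g12 * A11 + g22 * A21) + y2 * v2 * (g12 * A12 + g22 * A22))"
    apply (simp only: sum12 r0 r21 s)
    apply (simp only: A11_def[symmetric] A12_def[symmetric] A21_def[symmetric] A22_def[symmetric] g11_def[symmetric] g12_def[symmetric] g22_def[symmetric] u1_def[symmetric] u2'_def[symmetric] w1_def[symmetric] w2_def[symmetric] v1_def[symmetric] v2_def[symmetric] y1_def[symmetric] y2_def[symmetric])
    apply (simp add: algebra_simps)
    done
  have R: "gM g w u2 v * gM g w u y - gM g w u v * gM g w u2 y
       = (g11 * g22 - g12 * g12) * (u1 * w2 - u2' * w1) * (y1 * v2 - y2 * v1)"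
    apply (simp only: gM_def sum12 s)
    apply (simp only: A11_def[symmetric] A12_def[symmetric] A21_def[symmetric] A22_def[symmetric] g11_def[symmetric] g12_def[symmetric] g22_def[symmetric] u1_def[symmetric] u2'_def[symmetric] w1_def[symmetric] w2_def[symmetric] v1_def[symmetric] v2_def[symmetric] y1_def[symmetric] y2_def[symmetric])
    apply (simp add: algebra_simps)
    done
  have "(u1 * w2 - u2' * w1) * (y1 * v1 * (g11 * A11 + g12 * A21) + y1 * v2 * (g11 * A12 + g12 * A22)
            + y2 * v1 * (g12 * A11 + g22 * A21) + y2 * v2 * (g12 * A12 + g22 * A22))
       = (u1 * w2 - u2' * w1) * (y1 * v2 - y2 * v1) * B"
  proof -
    have hC: "g12 * A11 + g22 * A21 = - B" using e3 B_def by linarith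
    have hB: "g11 * A12 + g12 * A22 = B" using B_def by simp
    show ?thesis by (simp only: e1 e2 hC hB, simp add: algebra_simps)
  qed
  moreover have "gauss_curv g w * (gM g w u2 v * gM g w u y - gM g w u v * gM g w u2 y)
      = (u1 * w2 - u2' * w1) * (y1 * v2 - y2 * v1) * B"
  proof -
    have "gauss_curv g w * (gM g w u2 v * gM g w u y - gM g w u v * gM g w u2 y)
       = B / detg g w * (detg g w * (u1 * w2 - u2' * w1) * (y1 * v2 - y2 * v1))"
      by (simp only: kap R dt)
    also have "\<dots> = (u1 * w2 - u2' * w1) * (y1 * v2 - y2 * v1) * B" using dn by simp
    finally show ?thesis .
  qed
  ultimately show ?thesis using L by simp
qed

end


declare One_nat_def [simp del]

definition det3 :: "real \<Rightarrow> real \<Rightarrow> real \<Rightarrow> real \<Rightarrow> real \<Rightarrow> real \<Rightarrow> real \<Rightarrow> real \<Rightarrow> real \<Rightarrow> real" where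
  "det3 a11 a12 a13 a21 a22 a23 a31 a32 a33 = a11*(a22*a33 - a23*a32) - a12*(a21*a33 - a23*a31) + a13*(a21*a32 - a22*a31)"

lemma det3_mult:
  "det3 a11 a12 a13 a21 a22 a23 a31 a32 a33 * det3 b11 b12 b13 b21 b22 b23 b31 b32 b33
   = det3 (a11*b11+a12*b21+a13*b31) (a11*b12+a12*b22+a13*b32) (a11*b13+a12*b23+a13*b33)
          (a21*b11+a22*b21+a23*b31) (a21*b12+a22*b22+a23*b32) (a21*b13+a22*b23+a23*b33)
          (a31*b11+a32*b21+a33*b31) (a31*b12+a32*b22+a33*b32) (a31*b13+a32*b23+a33*b33)"
  unfolding det3_def by (simp add: algebra_simps)

lemma adj3:
  assumes "a11*x1+a12*x2+a13*x3 = 0" "a21*x1+a22*x2+a23*x3 = 0" "a31*x1+a32*x2+a33*x3 = 0"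
  shows "det3 a11 a12 a13 a21 a22 a23 a31 a32 a33 * x1 = 0"
    "det3 a11 a12 a13 a21 a22 a23 a31 a32 a33 * x2 = 0"
    "det3 a11 a12 a13 a21 a22 a23 a31 a32 a33 * x3 = 0"
proof -
  have "det3 a11 a12 a13 a21 a22 a23 a31 a32 a33 * x1 = (a22*a33 - a23*a32)*(a11*x1+a12*x2+a13*x3)
     - (a12*a33 - a13*a32)*(a21*x1+a22*x2+a23*x3) + (a12*a23 - a13*a22)*(a31*x1+a32*x2+a33*x3)"
    unfolding det3_def by (simp add: algebra_simps)
  then show "det3 a11 a12 a13 a21 a22 a23 a31 a32 a33 * x1 = 0" using assms by simp
  have "det3 a11 a12 a13 a21 a22 a23 a31 a32 a33 * x2 = - (a21*a33 - a23*a31)*(a11*x1+a12*x2+a13*x3)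
     + (a11*a33 - a13*a31)*(a21*x1+a22*x2+a23*x3) - (a11*a23 - a13*a21)*(a31*x1+a32*x2+a33*x3)"
    unfolding det3_def by (simp add: algebra_simps)
  then show "det3 a11 a12 a13 a21 a22 a23 a31 a32 a33 * x2 = 0" using assms by simp
  have "det3 a11 a12 a13 a21 a22 a23 a31 a32 a33 * x3 = (a21*a32 - a22*a31)*(a11*x1+a12*x2+a13*x3)
     - (a11*a32 - a12*a31)*(a21*x1+a22*x2+a23*x3) + (a11*a22 - a12*a21)*(a31*x1+a32*x2+a33*x3)"
    unfolding det3_def by (simp add: algebra_simps)
  then show "det3 a11 a12 a13 a21 a22 a23 a31 a32 a33 * x3 = 0" using assms by simp
qed

definition xd :: "(complex \<Rightarrow> complex) \<Rightarrow> nat \<Rightarrow> nat \<Rightarrow> complex \<Rightarrow> real" where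
  "xd X i a z = pd i (\<lambda>v. coord a (X v)) z"

definition Gv :: "metric \<Rightarrow> complex \<Rightarrow> (nat \<Rightarrow> real) \<Rightarrow> (nat \<Rightarrow> real) \<Rightarrow> real" where
  "Gv g w u v = (\<Sum>a\<in>{1,2}. \<Sum>b\<in>{1,2}. g a b w * u a * v b) + u 3 * v 3"

definition cdv :: "metric \<Rightarrow> (complex \<Rightarrow> complex) \<Rightarrow> nat \<Rightarrow> (nat \<Rightarrow> complex \<Rightarrow> real) \<Rightarrow> complex \<Rightarrow> nat \<Rightarrow> real" where
  "cdv g X i V z k = (if k = 3 then pd i (V 3) z
      else pd i (V k) z + (\<Sum>a\<in>{1,2}. \<Sum>b\<in>{1,2}. chr g k a b (X z) * xd X i a z * V b z))"

definition fld :: "(nat \<Rightarrow> complex \<Rightarrow> real) \<Rightarrow> complex \<Rightarrow> nat \<Rightarrow> real" where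
  "fld V z = (\<lambda>k. V k z)"

definition DF :: "metric \<Rightarrow> (complex \<Rightarrow> complex) \<Rightarrow> nat \<Rightarrow> (nat \<Rightarrow> complex \<Rightarrow> real) \<Rightarrow> nat \<Rightarrow> complex \<Rightarrow> real" where
  "DF g X i V = (\<lambda>k z. cdv g X i V z k)"

definition fdiff :: "(nat \<Rightarrow> complex \<Rightarrow> real) \<Rightarrow> complex \<Rightarrow> bool" where
  "fdiff V z \<longleftrightarrow> V 1 differentiable (at z) \<and> V 2 differentiable (at z) \<and> V 3 differentiable (at z)"

lemma Gv_expand: "Gv g w u v = g 1 1 w * u 1 * v 1 + g 1 2 w * u 1 * v 2 + g 2 1 w * u 2 * v 1
   + g 2 2 w * u 2 * v 2 + u 3 * v 3"
  by (simp only: Gv_def sum12 add.assoc)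

lemma cdv3: "cdv g X i V z 3 = pd i (V 3) z"
  by (simp add: cdv_def)

lemma cdv1: "cdv g X i V z 1 = pd i (V 1) z + (chr g 1 1 1 (X z) * xd X i 1 z * V 1 z
   + chr g 1 1 2 (X z) * xd X i 1 z * V 2 z + chr g 1 2 1 (X z) * xd X i 2 z * V 1 z
   + chr g 1 2 2 (X z) * xd X i 2 z * V 2 z)"
  by (simp only: cdv_def sum12, simp add: algebra_simps)

lemma cdv2: "cdv g X i V z 2 = pd i (V 2) z + (chr g 2 1 1 (X z) * xd X i 1 z * V 1 z
   + chr g 2 1 2 (X z) * xd X i 1 z * V 2 z + chr g 2 2 1 (X z) * xd X i 2 z * V 1 z
   + chr g 2 2 2 (X z) * xd X i 2 z * V 2 z)"
  by (simp only: cdv_def sum12, simp add: algebra_simps)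

lemma pd_mult3:
  fixes f g k :: "complex \<Rightarrow> real"
  assumes "f differentiable (at w)" "g differentiable (at w)" "k differentiable (at w)"
  shows "pd i (\<lambda>v. f v * g v * k v) w = pd i f w * g w * k w + f w * pd i g w * k w + f w * g w * pd i k w"
proof -
  have "pd i (\<lambda>v. f v * g v * k v) w = (f w * g w) * pd i k w + pd i (\<lambda>v. f v * g v) w * k w"
    using pd_mult[of "\<lambda>v. f v * g v" w k i] assms by simp
  also have "pd i (\<lambda>v. f v * g v) w = f w * pd i g w + pd i f w * g w" using pd_mult assms by blast
  finally show ?thesis by (simp add: algebra_simps)
qed

locale surf = metric_loc g U for g U +
  fixes \<Omega> :: "complex set" and X :: "complex \<Rightarrow> complex" and h :: "complex \<Rightarrow> real"
    and NM :: "complex \<Rightarrow> complex" and \<nu> :: "complex \<Rightarrow> real"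
  assumes \<Omega>_open: "open \<Omega>"
    and X_smooth: "smooth_on \<Omega> X" and h_smooth: "smooth_on \<Omega> h"
    and X_in: "X ` \<Omega> \<subseteq> U"
    and NM_smooth: "smooth_on \<Omega> NM" and \<nu>_smooth: "smooth_on \<Omega> \<nu>"
begin

lemma Xz: "z \<in> \<Omega> \<Longrightarrow> X z \<in> U" using X_in by auto

lemma X_diff: "z \<in> \<Omega> \<Longrightarrow> X differentiable (at z)" using smooth_d0[OF X_smooth] .

lemma gX_diff: "z \<in> \<Omega> \<Longrightarrow> a \<in> {1,2} \<Longrightarrow> b \<in> {1,2} \<Longrightarrow> (\<lambda>v. g a b (X v)) differentiable (at z)"
  by (rule differentiable_compose[OF g_diff[OF Xz] X_diff])

lemma chrX_diff: "z \<in> \<Omega> \<Longrightarrow> k \<in> {1,2} \<Longrightarrow> a \<in> {1,2} \<Longrightarrow> b \<in> {1,2} \<Longrightarrow> (\<lambda>v. chr g k a b (X v)) differentiable (at z)"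
  by (rule differentiable_compose[OF chr_diff[OF Xz] X_diff])

lemma xd_pd: "z \<in> \<Omega> \<Longrightarrow> xd X i a z = coord a (pd i X z)"
  unfolding xd_def by (rule pd_coord[OF X_diff])

lemma pd_gX:
  assumes z: "z \<in> \<Omega>" and ab: "a \<in> {1,2}" "b \<in> {1,2}"
  shows "pd i (\<lambda>v. g a b (X v)) z = pd 1 (g a b) (X z) * xd X i 1 z + pd 2 (g a b) (X z) * xd X i 2 z"
  using pd_comp[OF g_diff[OF Xz[OF z] ab] X_diff[OF z]] xd_pd[OF z] by (simp add: coord_def)

lemma pd_chrX:
  assumes z: "z \<in> \<Omega>" and kab: "k \<in> {1,2}" "a \<in> {1,2}" "b \<in> {1,2}"
  shows "pd i (\<lambda>v. chr g k a b (X v)) z = pd 1 (chr g k a b) (X z) * xd X i 1 z + pd 2 (chr g k a b) (X z) * xd X i 2 z"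
  using pd_comp[OF chr_diff[OF Xz[OF z] kab] X_diff[OF z]] xd_pd[OF z] by (simp add: coord_def)

lemma compat_X:
  assumes z: "z \<in> \<Omega>" and ab: "a \<in> {1,2}" "b \<in> {1,2}"
  shows "pd i (\<lambda>v. g a b (X v)) z = (\<Sum>c\<in>{1,2}. (\<Sum>m\<in>{1,2}. g m b (X z) * chr g m c a (X z) + g a m (X z) * chr g m c b (X z)) * xd X i c z)"
  using pd_gX[OF z ab] compat[OF Xz[OF z] ab] by (simp add: sum12)

lemma Gv_comp:
  assumes z: "z \<in> \<Omega>" and V: "fdiff V z" and W: "fdiff W z"
  shows "pd i (\<lambda>v. Gv g (X v) (fld V v) (fld W v)) z
     = Gv g (X z) (cdv g X i V z) (fld W z) + Gv g (X z) (fld V z) (cdv g X i W z)"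
proof -
  have dV: "V 1 differentiable (at z)" "V 2 differentiable (at z)" "V 3 differentiable (at z)"
    using V by (auto simp: fdiff_def)
  have dW: "W 1 differentiable (at z)" "W 2 differentiable (at z)" "W 3 differentiable (at z)"
    using W by (auto simp: fdiff_def)
  have dg: "(\<lambda>v. g 1 1 (X v)) differentiable (at z)" "(\<lambda>v. g 1 2 (X v)) differentiable (at z)"
     "(\<lambda>v. g 2 1 (X v)) differentiable (at z)" "(\<lambda>v. g 2 2 (X v)) differentiable (at z)"
    using gX_diff[OF z] by auto
  have e: "(\<lambda>v. Gv g (X v) (fld V v) (fld W v)) = (\<lambda>v. g 1 1 (X v) * V 1 v * W 1 v + g 1 2 (X v) * V 1 v * W 2 v
     + g 2 1 (X v) * V 2 v * W 1 v + g 2 2 (X v) * V 2 v * W 2 v + V 3 v * W 3 v)"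
    by (simp only: Gv_expand fld_def)
  have "pd i (\<lambda>v. Gv g (X v) (fld V v) (fld W v)) z =
      pd i (\<lambda>v. g 1 1 (X v)) z * V 1 z * W 1 z + g 1 1 (X z) * pd i (V 1) z * W 1 z + g 1 1 (X z) * V 1 z * pd i (W 1) z
    + (pd i (\<lambda>v. g 1 2 (X v)) z * V 1 z * W 2 z + g 1 2 (X z) * pd i (V 1) z * W 2 z + g 1 2 (X z) * V 1 z * pd i (W 2) z)
    + (pd i (\<lambda>v. g 2 1 (X v)) z * V 2 z * W 1 z + g 2 1 (X z) * pd i (V 2) z * W 1 z + g 2 1 (X z) * V 2 z * pd i (W 1) z)
    + (pd i (\<lambda>v. g 2 2 (X v)) z * V 2 z * W 2 z + g 2 2 (X z) * pd i (V 2) z * W 2 z + g 2 2 (X z) * V 2 z * pd i (W 2) z)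
    + (pd i (V 3) z * W 3 z + V 3 z * pd i (W 3) z)"
    unfolding e
    by (simp add: pd_add pd_mult3 pd_mult dV dW dg)
  also have "\<dots> = Gv g (X z) (cdv g X i V z) (fld W z) + Gv g (X z) (fld V z) (cdv g X i W z)"
    apply (simp only: compat_X[OF z] insert_iff simp_thms Gv_expand cdv1 cdv2 cdv3 fld_def sum12)
    apply (simp add: algebra_simps)
    done
  finally show ?thesis .
qed

end

definition psi :: "(complex \<Rightarrow> complex) \<Rightarrow> (complex \<Rightarrow> real) \<Rightarrow> nat \<Rightarrow> nat \<Rightarrow> complex \<Rightarrow> real" where
  "psi X h j = (\<lambda>k z. if k = 3 then pd j h z else xd X j k z)"

definition nf :: "(complex \<Rightarrow> complex) \<Rightarrow> (complex \<Rightarrow> real) \<Rightarrow> nat \<Rightarrow> complex \<Rightarrow> real" where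
  "nf NM \<nu> = (\<lambda>k z. if k = 3 then \<nu> z else coord k (NM z))"

lemma psi_simps: "psi X h j 3 z = pd j h z" "psi X h j 1 z = xd X j 1 z" "psi X h j 2 z = xd X j 2 z"
  by (simp_all add: psi_def)

lemma nf_simps: "nf NM \<nu> 3 z = \<nu> z" "nf NM \<nu> 1 z = coord 1 (NM z)" "nf NM \<nu> 2 z = coord 2 (NM z)"
  by (simp_all add: nf_def)

lemma fld_simps: "fld V z k = V k z" by (simp add: fld_def)

lemma DF_simps: "DF g X i V k z = cdv g X i V z k" by (simp add: DF_def)

context surf
begin

lemma Gv_sym: "w \<in> U \<Longrightarrow> Gv g w u v = Gv g w v u"
  using g_sym by (simp add: Gv_expand algebra_simps)

lemma smooth_Xc: "smooth_on \<Omega> (\<lambda>v. coord a (X v))"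
  by (rule smooth_coord[OF X_smooth \<Omega>_open])

lemma smooth_Nc: "smooth_on \<Omega> (\<lambda>v. coord a (NM v))"
  by (rule smooth_coord[OF NM_smooth \<Omega>_open])

lemma xd_diff: "z \<in> \<Omega> \<Longrightarrow> xd X j a differentiable (at z)"
proof -
  assume z: "z \<in> \<Omega>"
  have "xd X j a = pd j (\<lambda>v. coord a (X v))" by (simp add: xd_def[abs_def])
  then show ?thesis using smooth_d1[OF smooth_Xc z] by simp
qed

lemma psi_fdiff: "z \<in> \<Omega> \<Longrightarrow> fdiff (psi X h j) z"
proof -
  assume z: "z \<in> \<Omega>"
  have a: "psi X h j 1 = xd X j 1" "psi X h j 2 = xd X j 2" "psi X h j 3 = pd j h"
    by (auto simp: psi_def)
  show ?thesis unfolding fdiff_def a using xd_diff[OF z] smooth_d1[OF h_smooth z] by simp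
qed

lemma nf_fdiff: "z \<in> \<Omega> \<Longrightarrow> fdiff (nf NM \<nu>) z"
proof -
  assume z: "z \<in> \<Omega>"
  have a: "nf NM \<nu> 1 = (\<lambda>v. coord 1 (NM v))" "nf NM \<nu> 2 = (\<lambda>v. coord 2 (NM v))" "nf NM \<nu> 3 = \<nu>"
    by (auto simp: nf_def)
  show ?thesis unfolding fdiff_def a using smooth_d0[OF smooth_Nc z] smooth_d0[OF \<nu>_smooth z] by simp
qed

lemma I_Gv:
  assumes z: "z \<in> \<Omega>"
  shows "Ifund g X h z i j = Gv g (X z) (fld (psi X h i) z) (fld (psi X h j) z)"
  by (simp add: Ifund_def gM_def Gv_def sum12 fld_simps psi_simps xd_pd[OF z])

lemma pd_xd: "z \<in> \<Omega> \<Longrightarrow> pd i (xd X j a) z = coord a (pd i (pd j X) z)"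
proof -
  assume z: "z \<in> \<Omega>"
  have "pd i (xd X j a) z = pd i (\<lambda>v. coord a (pd j X v)) z"
    by (rule pd_local[OF \<Omega>_open z]) (simp add: xd_pd)
  also have "\<dots> = coord a (pd i (pd j X) z)" by (rule pd_coord[OF smooth_d1[OF X_smooth z]])
  finally show ?thesis .
qed

lemma II_Gv:
  assumes z: "z \<in> \<Omega>"
  shows "IIfund g X h NM \<nu> z i j = Gv g (X z) (fld (DF g X i (psi X h j)) z) (fld (nf NM \<nu>) z)"
proof -
  have a: "psi X h j 1 = xd X j 1" "psi X h j 2 = xd X j 2" "psi X h j 3 = pd j h"
    by (auto simp: psi_def)
  show ?thesis
    by (simp add: IIfund_def gM_def Gv_def sum12 fld_simps nf_simps DF_simps cdv_def a pd_xd[OF z]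
        cov2_def Let_def xd_pd[OF z] coord_def algebra_simps)
qed

lemma fld_DF: "fld (DF g X i V) z = cdv g X i V z"
  by (simp add: fld_def DF_def)

lemma D3:
  assumes z: "z \<in> \<Omega>" and ij: "i \<in> {1,2}" "j \<in> {1,2}"
  shows "cdv g X i (psi X h j) z = cdv g X j (psi X h i) z"
proof
  fix k
  have a: "psi X h j 1 = xd X j 1" "psi X h j 2 = xd X j 2" "psi X h j 3 = pd j h"
    "psi X h i 1 = xd X i 1" "psi X h i 2 = xd X i 2" "psi X h i 3 = pd i h"
    by (auto simp: psi_def)
  have sX: "pd i (pd j X) z = pd j (pd i X) z" by (rule schwarz_smooth_c[OF X_smooth \<Omega>_open z])
  have sh: "pd i (pd j h) z = pd j (pd i h) z" by (rule schwarz_smooth[OF h_smooth \<Omega>_open z])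
  have cs: "chr g k' 2 1 (X z) = chr g k' 1 2 (X z)" for k' using chr_sym[OF Xz[OF z]] by simp
  show "cdv g X i (psi X h j) z k = cdv g X j (psi X h i) z k"
    by (simp add: cdv_def a pd_xd[OF z] sX sh sum12 cs algebra_simps psi_def)
qed

end

locale surfN = surf +
  assumes N_normal: "\<forall>z\<in>\<Omega>. \<forall>i\<in>{1,2}. gM g (X z) (NM z) (pd i X z) + \<nu> z * pd i h z = 0"
    and N_unit: "\<forall>z\<in>\<Omega>. gM g (X z) (NM z) (NM z) + \<nu> z * \<nu> z = 1"
begin

lemma NP:
  assumes z: "z \<in> \<Omega>" and j: "j \<in> {1,2}"
  shows "Gv g (X z) (fld (nf NM \<nu>) z) (fld (psi X h j) z) = 0"
proof -
  have "gM g (X z) (NM z) (pd j X z) + \<nu> z * pd j h z = 0" using N_normal z j by blast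
  then show ?thesis by (simp add: gM_def Gv_def sum12 fld_simps psi_simps nf_simps xd_pd[OF z])
qed

lemma NN: "z \<in> \<Omega> \<Longrightarrow> Gv g (X z) (fld (nf NM \<nu>) z) (fld (nf NM \<nu>) z) = 1"
  using N_unit by (simp add: gM_def Gv_def sum12 fld_simps nf_simps)

lemma D1:
  assumes z: "z \<in> \<Omega>" and j: "j \<in> {1,2}"
  shows "Gv g (X z) (cdv g X i (nf NM \<nu>) z) (fld (psi X h j) z) = - IIfund g X h NM \<nu> z i j"
proof -
  have "pd i (\<lambda>v. Gv g (X v) (fld (nf NM \<nu>) v) (fld (psi X h j) v)) z = pd i (\<lambda>v. 0::real) z"
    by (rule pd_local[OF \<Omega>_open z]) (rule NP[OF _ j], assumption)
  then have "Gv g (X z) (cdv g X i (nf NM \<nu>) z) (fld (psi X h j) z)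
     + Gv g (X z) (fld (nf NM \<nu>) z) (cdv g X i (psi X h j) z) = 0"
    using Gv_comp[OF z nf_fdiff[OF z] psi_fdiff[OF z]] by (simp add: pd_const)
  moreover have "Gv g (X z) (fld (nf NM \<nu>) z) (cdv g X i (psi X h j) z) = IIfund g X h NM \<nu> z i j"
    using II_Gv[OF z] Gv_sym[OF Xz[OF z]] by (simp add: fld_DF)
  ultimately show ?thesis by simp
qed

lemma D2:
  assumes z: "z \<in> \<Omega>"
  shows "Gv g (X z) (cdv g X i (nf NM \<nu>) z) (fld (nf NM \<nu>) z) = 0"
proof -
  have "pd i (\<lambda>v. Gv g (X v) (fld (nf NM \<nu>) v) (fld (nf NM \<nu>) v)) z = pd i (\<lambda>v. 1::real) z"
    by (rule pd_local[OF \<Omega>_open z]) (rule NN, assumption)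
  then have "Gv g (X z) (cdv g X i (nf NM \<nu>) z) (fld (nf NM \<nu>) z)
     + Gv g (X z) (fld (nf NM \<nu>) z) (cdv g X i (nf NM \<nu>) z) = 0"
    using Gv_comp[OF z nf_fdiff[OF z] nf_fdiff[OF z]] by (simp add: pd_const)
  then show ?thesis using Gv_sym[OF Xz[OF z]] by simp
qed

lemma D4:
  assumes z: "z \<in> \<Omega>"
  shows "pd k (\<lambda>v. Ifund g X h v i j) z = Gv g (X z) (cdv g X k (psi X h i) z) (fld (psi X h j) z)
      + Gv g (X z) (fld (psi X h i) z) (cdv g X k (psi X h j) z)"
proof -
  have "pd k (\<lambda>v. Ifund g X h v i j) z = pd k (\<lambda>v. Gv g (X v) (fld (psi X h i) v) (fld (psi X h j) v)) z"
    by (rule pd_local[OF \<Omega>_open z]) (simp add: I_Gv)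
  then show ?thesis using Gv_comp[OF z psi_fdiff[OF z] psi_fdiff[OF z]] by simp
qed

end

context metric_loc
begin

lemma frame_zero:
  assumes w: "w \<in> U"
    and nP1: "Gv g w N P1 = 0" and nP2: "Gv g w N P2 = 0" and nN: "Gv g w N N = 1"
    and dI: "Gv g w P1 P1 * Gv g w P2 P2 - Gv g w P1 P2 * Gv g w P1 P2 \<noteq> 0"
    and W1: "Gv g w W P1 = 0" and W2: "Gv g w W P2 = 0" and W3: "Gv g w W N = 0"
  shows "W 1 = 0 \<and> W 2 = 0 \<and> W 3 = 0"
proof -
  have s: "g 2 1 w = g 1 2 w" using g_sym w by simp
  define x1 where "x1 = g 1 1 w * W 1 + g 1 2 w * W 2"
  define x2 where "x2 = g 1 2 w * W 1 + g 2 2 w * W 2"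
  define x3 where "x3 = W 3"
  have Gx: "Gv g w W Y = Y 1 * x1 + Y 2 * x2 + Y 3 * x3" for Y
    by (simp add: Gv_expand x1_def x2_def x3_def s algebra_simps)
  have GB: "Gv g w Y Z = Y 1 * (g 1 1 w * Z 1 + g 1 2 w * Z 2) + Y 2 * (g 1 2 w * Z 1 + g 2 2 w * Z 2) + Y 3 * Z 3" for Y Z
    by (simp add: Gv_expand s algebra_simps)
  define dA where "dA = det3 (P1 1) (P1 2) (P1 3) (P2 1) (P2 2) (P2 3) (N 1) (N 2) (N 3)"
  have ax: "dA * x1 = 0" "dA * x2 = 0" "dA * x3 = 0"
    using adj3[of "P1 1" x1 "P1 2" x2 "P1 3" x3 "P2 1" "P2 2" "P2 3" "N 1" "N 2" "N 3"]
      W1 W2 W3 Gx unfolding dA_def by (simp_all add: algebra_simps)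
  have sym: "Gv g w Y Z = Gv g w Z Y" for Y Z using GB by (simp add: algebra_simps)
  have prod: "dA * det3 (g 1 1 w * P1 1 + g 1 2 w * P1 2) (g 1 1 w * P2 1 + g 1 2 w * P2 2) (g 1 1 w * N 1 + g 1 2 w * N 2)
          (g 1 2 w * P1 1 + g 2 2 w * P1 2) (g 1 2 w * P2 1 + g 2 2 w * P2 2) (g 1 2 w * N 1 + g 2 2 w * N 2)
          (P1 3) (P2 3) (N 3)
      = det3 (Gv g w P1 P1) (Gv g w P1 P2) (Gv g w P1 N) (Gv g w P2 P1) (Gv g w P2 P2) (Gv g w P2 N)
          (Gv g w N P1) (Gv g w N P2) (Gv g w N N)"
    unfolding dA_def det3_mult GB ..
  also have "\<dots> = Gv g w P1 P1 * Gv g w P2 P2 - Gv g w P1 P2 * Gv g w P1 P2"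
    using nP1 nP2 nN sym[of P1 N] sym[of P2 N] sym[of P2 P1] by (simp add: det3_def)
  finally have "dA \<noteq> 0" using dI by auto
  then have x0: "x1 = 0" "x2 = 0" "x3 = 0" using ax by simp_all
  have dg: "g 1 1 w * g 2 2 w - g 1 2 w * g 1 2 w \<noteq> 0" using det_nz[OF w] s by (simp add: detg_def)
  have "(g 1 1 w * g 2 2 w - g 1 2 w * g 1 2 w) * W 1 = g 2 2 w * x1 - g 1 2 w * x2"
    by (simp add: x1_def x2_def algebra_simps)
  then have a: "W 1 = 0" using x0 dg by simp
  have "(g 1 1 w * g 2 2 w - g 1 2 w * g 1 2 w) * W 2 = g 1 1 w * x2 - g 1 2 w * x1"
    by (simp add: x1_def x2_def algebra_simps)
  then have b: "W 2 = 0" using x0 dg by simp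
  show ?thesis using a b x0 x3_def by simp
qed

lemma Gv_lin2: "Gv g w Y (\<lambda>k. a * A k + b * B k + c * C k + d * D k)
    = a * Gv g w Y A + b * Gv g w Y B + c * Gv g w Y C + d * Gv g w Y D"
  by (simp add: Gv_expand algebra_simps)

lemma Gv_lin1: "Gv g w (\<lambda>k. a * A k + b * B k + c * C k + d * D k) Y
    = a * Gv g w A Y + b * Gv g w B Y + c * Gv g w C Y + d * Gv g w D Y"
  by (simp add: Gv_expand algebra_simps)

lemma parseval:
  assumes w: "w \<in> U"
    and nP1: "Gv g w N P1 = 0" and nP2: "Gv g w N P2 = 0" and nN: "Gv g w N N = 1"
    and dI: "Gv g w P1 P1 * Gv g w P2 P2 - Gv g w P1 P2 * Gv g w P1 P2 \<noteq> 0"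
  shows "Gv g w Y V = (Gv g w P2 P2 * Gv g w V P1 * Gv g w Y P1
       - Gv g w P1 P2 * (Gv g w V P1 * Gv g w Y P2 + Gv g w V P2 * Gv g w Y P1)
       + Gv g w P1 P1 * Gv g w V P2 * Gv g w Y P2) / (Gv g w P1 P1 * Gv g w P2 P2 - Gv g w P1 P2 * Gv g w P1 P2)
       + Gv g w V N * Gv g w Y N"
proof -
  have sym: "Gv g w A B = Gv g w B A" for A B using g_sym w by (simp add: Gv_expand algebra_simps)
  define d where "d = Gv g w P1 P1 * Gv g w P2 P2 - Gv g w P1 P2 * Gv g w P1 P2"
  define a1 where "a1 = Gv g w V P1"
  define a2 where "a2 = Gv g w V P2"
  define c where "c = Gv g w V N"
  define \<gamma>1 where "\<gamma>1 = (Gv g w P2 P2 * a1 - Gv g w P1 P2 * a2) / d"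
  define \<gamma>2 where "\<gamma>2 = (Gv g w P1 P1 * a2 - Gv g w P1 P2 * a1) / d"
  define W where "W = (\<lambda>k. 1 * V k + (- \<gamma>1) * P1 k + (- \<gamma>2) * P2 k + (- c) * N k)"
  have dn: "d \<noteq> 0" using dI d_def by simp
  have "Gv g w W P1 = a1 - \<gamma>1 * Gv g w P1 P1 - \<gamma>2 * Gv g w P1 P2"
    unfolding W_def Gv_lin1 using nP1 sym[of P2 P1] a1_def by simp
  also have "\<dots> = 0" using dn by (simp add: \<gamma>1_def \<gamma>2_def d_def field_simps, (simp add: algebra_simps)?)
  finally have w1: "Gv g w W P1 = 0" .
  have "Gv g w W P2 = a2 - \<gamma>1 * Gv g w P1 P2 - \<gamma>2 * Gv g w P2 P2"
    unfolding W_def Gv_lin1 using nP2 a2_def by simp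
  also have "\<dots> = 0" using dn by (simp add: \<gamma>1_def \<gamma>2_def d_def field_simps, (simp add: algebra_simps)?)
  finally have w2: "Gv g w W P2 = 0" .
  have w3: "Gv g w W N = 0"
    unfolding W_def Gv_lin1 using nN nP1 nP2 sym[of P1 N] sym[of P2 N] c_def by simp
  have W0: "W 1 = 0 \<and> W 2 = 0 \<and> W 3 = 0" by (rule frame_zero[OF w nP1 nP2 nN dI w1 w2 w3])
  have "Gv g w Y V = Gv g w Y (\<lambda>k. \<gamma>1 * P1 k + \<gamma>2 * P2 k + c * N k + 1 * W k)"
    using W0 by (simp add: Gv_expand W_def)
  also have "\<dots> = \<gamma>1 * Gv g w Y P1 + \<gamma>2 * Gv g w Y P2 + c * Gv g w Y N"
    unfolding Gv_lin2 using W0 by (simp add: Gv_expand)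
  also have "\<dots> = (Gv g w P2 P2 * a1 * Gv g w Y P1
       - Gv g w P1 P2 * (a1 * Gv g w Y P2 + a2 * Gv g w Y P1)
       + Gv g w P1 P1 * a2 * Gv g w Y P2) / d + c * Gv g w Y N"
    using dn by (simp add: \<gamma>1_def \<gamma>2_def field_simps, (simp add: algebra_simps)?)
  finally show ?thesis by (simp add: a1_def a2_def c_def d_def)
qed

end

context surf
begin

lemma pd_cdv:
  assumes z: "z \<in> \<Omega>" and k: "k \<in> {1,2}"
    and V1: "smooth_on \<Omega> (V 1)" and V2: "smooth_on \<Omega> (V 2)"
  shows "pd i (\<lambda>v. cdv g X j V v k) z = pd i (pd j (V k)) z + (\<Sum>a\<in>{1,2}. \<Sum>b\<in>{1,2}.
      (pd 1 (chr g k a b) (X z) * xd X i 1 z + pd 2 (chr g k a b) (X z) * xd X i 2 z) * xd X j a z * V b z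
      + chr g k a b (X z) * coord a (pd i (pd j X) z) * V b z + chr g k a b (X z) * xd X j a z * pd i (V b) z)"
proof -
  have kk: "k \<noteq> 3" using k by auto
  have e: "(\<lambda>v. cdv g X j V v k) = (\<lambda>v. pd j (V k) v + (chr g k 1 1 (X v) * xd X j 1 v * V 1 v
     + chr g k 1 2 (X v) * xd X j 1 v * V 2 v + chr g k 2 1 (X v) * xd X j 2 v * V 1 v
     + chr g k 2 2 (X v) * xd X j 2 v * V 2 v))"
    using kk by (simp add: cdv_def sum12 algebra_simps)
  have dVk: "pd j (V k) differentiable (at z)" using k smooth_d1[OF V1 z] smooth_d1[OF V2 z] by auto
  have dV: "V 1 differentiable (at z)" "V 2 differentiable (at z)" using smooth_d0[OF V1 z] smooth_d0[OF V2 z] by auto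
  have dc: "(\<lambda>v. chr g k a b (X v)) differentiable (at z)" if "a \<in> {1,2}" "b \<in> {1,2}" for a b
    using chrX_diff[OF z k that] .
  have dc': "(\<lambda>v. chr g k 1 1 (X v)) differentiable (at z)" "(\<lambda>v. chr g k 1 2 (X v)) differentiable (at z)"
    "(\<lambda>v. chr g k 2 1 (X v)) differentiable (at z)" "(\<lambda>v. chr g k 2 2 (X v)) differentiable (at z)"
    using dc by auto
  have dx: "xd X j 1 differentiable (at z)" "xd X j 2 differentiable (at z)" using xd_diff[OF z] by auto
  have pc: "pd i (\<lambda>v. chr g k a b (X v)) z = pd 1 (chr g k a b) (X z) * xd X i 1 z + pd 2 (chr g k a b) (X z) * xd X i 2 z"
    if "a \<in> {1,2}" "b \<in> {1,2}" for a b using pd_chrX[OF z k that] .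
  have "pd i (\<lambda>v. cdv g X j V v k) z = pd i (pd j (V k)) z
     + (pd i (\<lambda>v. chr g k 1 1 (X v)) z * xd X j 1 z * V 1 z + chr g k 1 1 (X z) * pd i (xd X j 1) z * V 1 z + chr g k 1 1 (X z) * xd X j 1 z * pd i (V 1) z)
     + (pd i (\<lambda>v. chr g k 1 2 (X v)) z * xd X j 1 z * V 2 z + chr g k 1 2 (X z) * pd i (xd X j 1) z * V 2 z + chr g k 1 2 (X z) * xd X j 1 z * pd i (V 2) z)
     + (pd i (\<lambda>v. chr g k 2 1 (X v)) z * xd X j 2 z * V 1 z + chr g k 2 1 (X z) * pd i (xd X j 2) z * V 1 z + chr g k 2 1 (X z) * xd X j 2 z * pd i (V 1) z)
     + (pd i (\<lambda>v. chr g k 2 2 (X v)) z * xd X j 2 z * V 2 z + chr g k 2 2 (X z) * pd i (xd X j 2) z * V 2 z + chr g k 2 2 (X z) * xd X j 2 z * pd i (V 2) z)"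
    unfolding e by (simp add: pd_add pd_mult3 dVk dV dc' dx add.assoc)
  also have "\<dots> = pd i (pd j (V k)) z + (\<Sum>a\<in>{1,2}. \<Sum>b\<in>{1,2}.
      (pd 1 (chr g k a b) (X z) * xd X i 1 z + pd 2 (chr g k a b) (X z) * xd X i 2 z) * xd X j a z * V b z
      + chr g k a b (X z) * coord a (pd i (pd j X) z) * V b z + chr g k a b (X z) * xd X j a z * pd i (V b) z)"
    apply (simp only: sum12 pc insert_iff simp_thms pd_xd[OF z])
    done
  finally show ?thesis .
qed

lemma commutator:
  assumes z: "z \<in> \<Omega>" and k: "k \<in> {1,2}"
    and V1: "smooth_on \<Omega> (V 1)" and V2: "smooth_on \<Omega> (V 2)"
  shows "cdv g X 1 (DF g X 2 V) z k - cdv g X 2 (DF g X 1 V) z k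
    = (\<Sum>a\<in>{1,2}. \<Sum>b\<in>{1,2}. \<Sum>l\<in>{1,2}. xd X 1 a z * xd X 2 b z * V l z * Rc g k l a b (X z))"
proof -
  have kk: "k \<noteq> 3" using k by auto
  have sV: "pd 1 (pd 2 (V 1)) z = pd 2 (pd 1 (V 1)) z" "pd 1 (pd 2 (V 2)) z = pd 2 (pd 1 (V 2)) z"
    using schwarz_smooth[OF V1 \<Omega>_open z, of 1 2] schwarz_smooth[OF V2 \<Omega>_open z, of 1 2] by auto
  have sX: "pd 1 (pd 2 X) z = pd 2 (pd 1 X) z" by (rule schwarz_smooth_c[OF X_smooth \<Omega>_open z])
  have c12: "cdv g X 1 (DF g X 2 V) z k = pd 1 (\<lambda>v. cdv g X 2 V v k) z
      + (\<Sum>a\<in>{1,2}. \<Sum>b\<in>{1,2}. chr g k a b (X z) * xd X 1 a z * cdv g X 2 V z b)"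
    using kk by (simp add: cdv_def DF_def)
  have c21: "cdv g X 2 (DF g X 1 V) z k = pd 2 (\<lambda>v. cdv g X 1 V v k) z
      + (\<Sum>a\<in>{1,2}. \<Sum>b\<in>{1,2}. chr g k a b (X z) * xd X 2 a z * cdv g X 1 V z b)"
    using kk by (simp add: cdv_def DF_def)
  from k have "k = 1 \<or> k = 2" by auto
  then show ?thesis
    unfolding c12 c21 pd_cdv[OF z k V1 V2]
    apply (elim disjE)
    apply (simp_all only: sum12 cdv1 cdv2 Rc_def sV sX)
    apply (simp_all add: algebra_simps)
    done
qed

lemma commutator3:
  assumes z: "z \<in> \<Omega>" and V3: "smooth_on \<Omega> (V 3)"
  shows "cdv g X 1 (DF g X 2 V) z 3 - cdv g X 2 (DF g X 1 V) z 3 = 0"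
proof -
  have "pd 1 (pd 2 (V 3)) z = pd 2 (pd 1 (V 3)) z" using schwarz_smooth[OF V3 \<Omega>_open z] by simp
  then show ?thesis by (simp add: cdv_def DF_def[abs_def])
qed

end


declare One_nat_def [simp del]

lemma algF3:
  fixes a b c d a1 a2 b1 b2 c1 c2 lam L1 L2 K ka nu h1 h2 :: real
  assumes dd: "d = a*c - b*b" "d \<noteq> 0" and lk: "lam \<noteq> 0" "K \<noteq> 0" "lam * lam = K * d"
    and KD1: "2*lam*L1 = K*(a1*c + a*c1 - 2*b*b1)" and KD2: "2*lam*L2 = K*(a2*c + a*c2 - 2*b*b2)"
    and C1: "L2 + lam*(a*(b1 - a2/2) - b*(a1/2))/d - lam*(c*(a2/2) - b*(c1/2))/d = ka*nu*(h1*b - h2*a)"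
    and C2: "- L1 + lam*(a*(c1/2) - b*(a2/2))/d - lam*(c*(b2 - c1/2) - b*(c2/2))/d = ka*nu*(h1*c - h2*b)"
  shows "a1 - c1 + 2*b2 = -2*ka*nu*lam*h1/K" "a2 - c2 - 2*b1 = 2*ka*nu*lam*h2/K"
proof -
  define Pr where "Pr = a1 - c1 + 2*b2"
  define Qi where "Qi = a2 - c2 - 2*b1"
  have dl: "d / lam = lam / K" using lk by (simp add: field_simps)
  have L2e: "L2 = K*(a2*c + a*c2 - 2*b*b2) / (2*lam)" using KD2 lk by (simp add: field_simps)
  have L1e: "L1 = K*(a1*c + a*c1 - 2*b*b1) / (2*lam)" using KD1 lk by (simp add: field_simps)
  have C1': "- a*Qi/2 - b*Pr/2 = (lam*ka*nu/K)*(h1*b - h2*a)"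
  proof -
    define A where "A = (a*(b1 - a2/2) - b*(a1/2)) - (c*(a2/2) - b*(c1/2))"
    define R where "R = ka*nu*(h1*b - h2*a)"
    have "d*L2 + lam*A - d*R = d*((L2 + lam*(a*(b1 - a2/2) - b*(a1/2))/d - lam*(c*(a2/2) - b*(c1/2))/d) - R)"
      using dd(2) unfolding A_def by (simp add: field_simps)
    then have s1: "d*L2 + lam*A = d*R" using C1 R_def by simp
    have "lam*(d*L2 + lam*A) = lam*(d*R)" using s1 by simp
    then have "d*(lam*L2) + (lam*lam)*A = lam*d*R" by (simp add: algebra_simps)
    moreover have lL: "lam*L2 = K*(a2*c + a*c2 - 2*b*b2)/2" using KD2 by (simp add: field_simps)
    ultimately have "d*(K*(a2*c + a*c2 - 2*b*b2)/2) + (K*d)*A = lam*d*R" by (simp only: lL lk(3))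
    then have "(K*d)*((a2*c + a*c2 - 2*b*b2)/2 + A) = (K*d)*(lam*R/K)" using lk by (simp add: field_simps)
    moreover have kd: "K*d \<noteq> 0" using lk dd by simp
    ultimately have "(a2*c + a*c2 - 2*b*b2)/2 + A = lam*R/K" using mult_left_cancel[OF kd] by blast
    then show ?thesis using lk(2) unfolding A_def R_def Pr_def Qi_def by (simp add: field_simps, linarith?)
  qed
  have C2': "- c*Pr/2 - b*Qi/2 = (lam*ka*nu/K)*(h1*c - h2*b)"
  proof -
    define A where "A = (a*(c1/2) - b*(a2/2)) - (c*(b2 - c1/2) - b*(c2/2))"
    define R where "R = ka*nu*(h1*c - h2*b)"
    have "- d*L1 + lam*A - d*R = d*((- L1 + lam*(a*(c1/2) - b*(a2/2))/d - lam*(c*(b2 - c1/2) - b*(c2/2))/d) - R)"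
      using dd(2) unfolding A_def by (simp add: field_simps)
    then have s1: "- d*L1 + lam*A = d*R" using C2 R_def by simp
    have "lam*(- d*L1 + lam*A) = lam*(d*R)" using s1 by simp
    then have "- d*(lam*L1) + (lam*lam)*A = lam*d*R" by (simp add: algebra_simps)
    moreover have lL: "lam*L1 = K*(a1*c + a*c1 - 2*b*b1)/2" using KD1 by (simp add: field_simps)
    ultimately have "- d*(K*(a1*c + a*c1 - 2*b*b1)/2) + (K*d)*A = lam*d*R" by (simp only: lL lk(3))
    then have "(K*d)*(- (a1*c + a*c1 - 2*b*b1)/2 + A) = (K*d)*(lam*R/K)" using lk by (simp add: field_simps)
    moreover have kd: "K*d \<noteq> 0" using lk dd by simp
    ultimately have "- (a1*c + a*c1 - 2*b*b1)/2 + A = lam*R/K" using mult_left_cancel[OF kd] by blast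
    then show ?thesis using lk(2) unfolding A_def R_def Pr_def Qi_def by (simp add: field_simps, linarith?)
  qed
  define mu where "mu = lam*ka*nu/K"
  define p where "p = Pr + 2*mu*h1"
  define q where "q = Qi - 2*mu*h2"
  have e1: "- b*p - a*q = 0" using C1' lk(2) unfolding p_def q_def mu_def by (simp add: field_simps, linarith?)
  have e2: "- c*p - b*q = 0" using C2' lk(2) unfolding p_def q_def mu_def by (simp add: field_simps, linarith?)
  have "d * p = 0"
  proof -
    have "d * p = b*(- b*p - a*q) - a*(- c*p - b*q)" by (simp add: dd(1) algebra_simps)
    then show ?thesis using e1 e2 by simp
  qed
  then have p0: "p = 0" using dd(2) by simp
  have "d * q = b*(- c*p - b*q) - c*(- b*p - a*q)" by (simp add: dd(1) algebra_simps)
  then have "d * q = 0" using e1 e2 by simp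
  then have q0: "q = 0" using dd(2) by simp
  show "a1 - c1 + 2*b2 = -2*ka*nu*lam*h1/K" using p0 unfolding p_def Pr_def mu_def by (simp add: field_simps)
  show "a2 - c2 - 2*b1 = 2*ka*nu*lam*h2/K" using q0 unfolding q_def Qi_def mu_def by (simp add: field_simps)
qed
lemma algF2:
  fixes a b c d a1 a2 b1 b2 c1 c2 lam L1 L2 K nu t11 t12 t21 t22 \<tau>1 \<tau>2 h11 h12 h21 h22 :: real
  assumes dd: "d = a*c - b*b" "d \<noteq> 0" and lk: "lam \<noteq> 0" "K \<noteq> 0" "lam * lam = K * d"
    and KD1: "2*lam*L1 = K*(a1*c + a*c1 - 2*b*b1)" and KD2: "2*lam*L2 = K*(a2*c + a*c2 - 2*b*b2)"
    and T11: "a1*\<tau>1 + b1*\<tau>2 + a*t11 + b*t21 = h11"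
    and T21: "b1*\<tau>1 + c1*\<tau>2 + b*t11 + c*t21 = h21"
    and T12: "a2*\<tau>1 + b2*\<tau>2 + a*t12 + b*t22 = h12"
    and T22: "b2*\<tau>1 + c2*\<tau>2 + b*t12 + c*t22 = h22"
    and H11: "h11 = (a1/2)*\<tau>1 + (b1 - a2/2)*\<tau>2 + lam*nu"
    and H12: "h12 = (a2/2)*\<tau>1 + (c1/2)*\<tau>2"
    and H21: "h21 = (a2/2)*\<tau>1 + (c1/2)*\<tau>2"
    and H22: "h22 = (b2 - c1/2)*\<tau>1 + (c2/2)*\<tau>2 + lam*nu"
  shows "(- (L1*\<tau>1 + lam*t11) - (L2*\<tau>2 + lam*t22)) / lam = - 2 * (lam*(a + c)/(2*d)) * nu"
proof -
  have dL1: "2*d*L1 = lam*(a1*c + a*c1 - 2*b*b1)"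
  proof -
    have "lam*(2*d*L1) = d*(2*lam*L1)" by (simp add: algebra_simps)
    also have "\<dots> = (K*d)*(a1*c + a*c1 - 2*b*b1)" using KD1 by simp
    also have "\<dots> = lam*(lam*(a1*c + a*c1 - 2*b*b1))" using lk(3) by simp
    finally show ?thesis using lk(1) by simp
  qed
  have dL2: "2*d*L2 = lam*(a2*c + a*c2 - 2*b*b2)"
  proof -
    have "lam*(2*d*L2) = d*(2*lam*L2)" by (simp add: algebra_simps)
    also have "\<dots> = (K*d)*(a2*c + a*c2 - 2*b*b2)" using KD2 by simp
    also have "\<dots> = lam*(lam*(a2*c + a*c2 - 2*b*b2))" using lk(3) by simp
    finally show ?thesis using lk(1) by simp
  qed
  have "d*t11 = c*(a*t11 + b*t21) - b*(b*t11 + c*t21)" by (simp add: dd(1) algebra_simps)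
  also have "a*t11 + b*t21 = h11 - a1*\<tau>1 - b1*\<tau>2" using T11 by simp
  also have "b*t11 + c*t21 = h21 - b1*\<tau>1 - c1*\<tau>2" using T21 by simp
  finally have dt11: "d*t11 = c*(h11 - a1*\<tau>1 - b1*\<tau>2) - b*(h21 - b1*\<tau>1 - c1*\<tau>2)" .
  have "d*t22 = a*(b*t12 + c*t22) - b*(a*t12 + b*t22)" by (simp add: dd(1) algebra_simps)
  also have "b*t12 + c*t22 = h22 - b2*\<tau>1 - c2*\<tau>2" using T22 by simp
  also have "a*t12 + b*t22 = h12 - a2*\<tau>1 - b2*\<tau>2" using T12 by simp
  finally have dt22: "d*t22 = a*(h22 - b2*\<tau>1 - c2*\<tau>2) - b*(h12 - a2*\<tau>1 - b2*\<tau>2)" .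
  have main: "d*(- (L1*\<tau>1 + lam*t11) - (L2*\<tau>2 + lam*t22)) = - lam*lam*(a + c)*nu"
  proof -
    have "2*(d*(- (L1*\<tau>1 + lam*t11) - (L2*\<tau>2 + lam*t22)))
        = - (2*d*L1)*\<tau>1 - (2*d*L2)*\<tau>2 - 2*lam*(d*t11) - 2*lam*(d*t22)" by (simp add: algebra_simps)
    also have "\<dots> = 2*(- lam*lam*(a + c)*nu)"
      unfolding dL1 dL2 dt11 dt22 H11 H12 H21 H22 by (simp add: algebra_simps)
    finally show ?thesis by simp
  qed
  show ?thesis
  proof -
    have "(- (L1*\<tau>1 + lam*t11) - (L2*\<tau>2 + lam*t22)) = - lam*lam*(a + c)*nu / d"
      using main dd(2) by (simp add: field_simps)
    then show ?thesis using lk(1) dd(2) by (simp add: field_simps)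
  qed
qed

lemma algF1:
  fixes a b c d a1 a2 b1 b2 c1 c2 lam K ka nu h1 h2 h11 h22 :: real
  assumes dd: "d = a*c - b*b" "d \<noteq> 0" and lk: "lam \<noteq> 0" "K \<noteq> 0"
    and P: "a1 - c1 + 2*b2 = -2*ka*nu*lam*h1/K" and Q: "a2 - c2 - 2*b1 = 2*ka*nu*lam*h2/K"
    and N1: "(c*h1*h1 - 2*b*h1*h2 + a*h2*h2)/d + nu*nu = 1"
    and H11: "h11 = (a1/2)*((c*h1 - b*h2)/d) + (b1 - a2/2)*((a*h2 - b*h1)/d) + lam*nu"
    and H22: "h22 = (b2 - c1/2)*((c*h1 - b*h2)/d) + (c2/2)*((a*h2 - b*h1)/d) + lam*nu"
  shows "(h11 + h22)/lam = (2*K - ka*(1 - nu*nu))*nu/K"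
proof -
  have "h11 + h22 = (a1 - c1 + 2*b2)/2 * ((c*h1 - b*h2)/d) - (a2 - c2 - 2*b1)/2 * ((a*h2 - b*h1)/d) + 2*lam*nu"
    unfolding H11 H22 by (simp add: algebra_simps add_divide_distrib diff_divide_distrib)
  also have "\<dots> = - ka*nu*lam/K * ((c*h1*h1 - 2*b*h1*h2 + a*h2*h2)/d) + 2*lam*nu"
    unfolding P Q using dd(2) lk by (simp add: field_simps, (simp add: algebra_simps)?)
  also have "(c*h1*h1 - 2*b*h1*h2 + a*h2*h2)/d = 1 - nu*nu" using N1 by simp
  finally have "h11 + h22 = - ka*nu*lam/K * (1 - nu*nu) + 2*lam*nu" .
  then show ?thesis using lk by (simp add: field_simps, (simp add: algebra_simps)?)
qed

lemma ofreal_diff: "(f::complex \<Rightarrow> real) differentiable (at z) \<Longrightarrow> (\<lambda>v. complex_of_real (f v)) differentiable (at z)"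
  by (rule differentiable_compose[OF bounded_linear_imp_differentiable[OF bounded_linear_of_real]])

lemma lap_real:
  fixes f :: "complex \<Rightarrow> real"
  assumes S: "open S" "z \<in> S" and f: "smooth_on S f"
  shows "lapII \<rho> (\<lambda>w. complex_of_real (f w)) z
     = complex_of_real ((pd 1 (pd 1 f) z + pd 2 (pd 2 f) z) / (2 * \<rho> z))"
proof -
  define F where "F = (\<lambda>w. complex_of_real (f w))"
  define H where "H = (\<lambda>v. (1/2) * complex_of_real (pd 1 f v) + (\<i>/2) * complex_of_real (pd 2 f v))"
  have e: "dzb F v = H v" if v: "v \<in> S" for v
  proof -
    have d: "f differentiable (at v)" using smooth_d0[OF f v] .
    have "pdx F v = complex_of_real (pd 1 f v)" using pd_ofreal[OF d, of 1] by (simp add: F_def pd_def)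
    moreover have "pdy F v = complex_of_real (pd 2 f v)" using pd_ofreal[OF d, of 2] by (simp add: F_def pd_def)
    ultimately show ?thesis by (simp add: dzb_def H_def field_simps)
  qed
  have dH: "pd k H z = (1/2) * complex_of_real (pd k (pd 1 f) z) + (\<i>/2) * complex_of_real (pd k (pd 2 f) z)" for k
  proof -
    have d1: "(\<lambda>v. complex_of_real (pd 1 f v)) differentiable (at z)" by (rule ofreal_diff[OF smooth_d1[OF f S(2)]])
    have d2: "(\<lambda>v. complex_of_real (pd 2 f v)) differentiable (at z)" by (rule ofreal_diff[OF smooth_d1[OF f S(2)]])
    have "pd k H z = pd k (\<lambda>v. (1/2) * complex_of_real (pd 1 f v)) z + pd k (\<lambda>v. (\<i>/2) * complex_of_real (pd 2 f v)) z"
      unfolding H_def by (rule pd_add) (use d1 d2 in auto)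
    also have "\<dots> = (1/2) * pd k (\<lambda>v. complex_of_real (pd 1 f v)) z + (\<i>/2) * pd k (\<lambda>v. complex_of_real (pd 2 f v)) z"
      by (simp only: pd_cmult[OF d1] pd_cmult[OF d2])
    also have "\<dots> = (1/2) * complex_of_real (pd k (pd 1 f) z) + (\<i>/2) * complex_of_real (pd k (pd 2 f) z)"
      using pd_ofreal[OF smooth_d1[OF f S(2)]] by simp
    finally show ?thesis .
  qed
  have px: "pdx (dzb F) z = pd 1 H z" unfolding pd_i_simps by (rule pdx_local[OF S]) (rule e)
  have py: "pdy (dzb F) z = pd 2 H z" unfolding pd_i_simps by (rule pdy_local[OF S]) (rule e)
  have sw: "pd 1 (pd 2 f) z = pd 2 (pd 1 f) z" by (rule schwarz_smooth[OF f S])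
  have "dz (dzb F) z = complex_of_real ((pd 1 (pd 1 f) z + pd 2 (pd 2 f) z) / 4)"
    unfolding dz_def px py dH sw by (simp add: complex_eq_iff)
  then have "lapII \<rho> F z = 2 / complex_of_real (\<rho> z) * complex_of_real ((pd 1 (pd 1 f) z + pd 2 (pd 2 f) z) / 4)"
    by (simp only: lapII_def)
  also have "\<dots> = complex_of_real (2 / \<rho> z * ((pd 1 (pd 1 f) z + pd 2 (pd 2 f) z) / 4))"
    by simp
  also have "2 / \<rho> z * ((pd 1 (pd 1 f) z + pd 2 (pd 2 f) z) / 4) = (pd 1 (pd 1 f) z + pd 2 (pd 2 f) z) / (2 * \<rho> z)"
    by (cases "\<rho> z = 0") (simp_all add: field_simps)
  finally show ?thesis by (simp add: F_def)
qed

lemma pd_minus: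
  fixes f :: "complex \<Rightarrow> 'b::real_normed_vector"
  assumes "f differentiable (at w)"
  shows "pd i (\<lambda>v. - f v) w = - pd i f w"
proof -
  obtain D where D: "(f has_derivative D) (at w)" using assms differentiable_def by blast
  show ?thesis using pd_eval[OF has_derivative_minus[OF D], of i] pd_eval[OF D, of i] by simp
qed

lemma pars_form:
  fixes a b c d K1 K2 h1 h2 :: real
  shows "(c*K1*h1 - b*(K1*h2 + K2*h1) + a*K2*h2)/d = K1*((c*h1 - b*h2)/d) + K2*((a*h2 - b*h1)/d)"
  by (cases "d = 0") (simp_all add: field_simps)

lemma inv2:
  fixes a b c p q :: real
  assumes "a*c - b*b \<noteq> 0"
  shows "a*((c*p - b*q)/(a*c - b*b)) + b*((a*q - b*p)/(a*c - b*b)) = p"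
    "b*((c*p - b*q)/(a*c - b*b)) + c*((a*q - b*p)/(a*c - b*b)) = q"
proof -
  have "a*((c*p - b*q)/(a*c - b*b)) + b*((a*q - b*p)/(a*c - b*b)) = (a*(c*p - b*q) + b*(a*q - b*p))/(a*c - b*b)"
    by (simp add: add_divide_distrib)
  also have "a*(c*p - b*q) + b*(a*q - b*p) = p * (a*c - b*b)" by (simp add: algebra_simps)
  finally show "a*((c*p - b*q)/(a*c - b*b)) + b*((a*q - b*p)/(a*c - b*b)) = p" using assms by simp
  have "b*((c*p - b*q)/(a*c - b*b)) + c*((a*q - b*p)/(a*c - b*b)) = (b*(c*p - b*q) + c*(a*q - b*p))/(a*c - b*b)"
    by (simp add: add_divide_distrib)
  also have "b*(c*p - b*q) + c*(a*q - b*p) = q * (a*c - b*b)" by (simp add: algebra_simps)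
  finally show "b*((c*p - b*q)/(a*c - b*b)) + c*((a*q - b*p)/(a*c - b*b)) = q" using assms by simp
qed

lemma qf_1: "qf M 1 = M 1 1" by (simp add: qf_def sum12 coord_def)
lemma qf_i: "qf M \<i> = M 2 2" by (simp add: qf_def sum12 coord_def)
lemma qf_1i: "qf M (1 + \<i>) = M 1 1 + M 1 2 + M 2 1 + M 2 2" by (simp add: qf_def sum12 coord_def)

locale lem6 = surfN g U \<Omega> X h NM \<nu> for g U \<Omega> X h NM \<nu> +
  fixes E :: "complex \<Rightarrow> complex" and F \<rho> :: "complex \<Rightarrow> real" and K :: real
  assumes II_posdef: "\<forall>z\<in>\<Omega>. \<forall>a. a \<noteq> 0 \<longrightarrow> qf (IIfund g X h NM \<nu> z) a > 0"
    and K_pos: "K > 0"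
    and K_const: "\<forall>z\<in>\<Omega>. ext_curv (Ifund g X h z) (IIfund g X h NM \<nu> z) = K"
    and I_conf: "\<forall>z\<in>\<Omega>. \<forall>a. qf (Ifund g X h z) a = 2 * Re (E z * a\<^sup>2) + 2 * F z * (cmod a)\<^sup>2"
    and II_conf: "\<forall>z\<in>\<Omega>. \<forall>a. qf (IIfund g X h NM \<nu> z) a = 2 * \<rho> z * (cmod a)\<^sup>2"
begin

lemma II_sym: "z \<in> \<Omega> \<Longrightarrow> IIfund g X h NM \<nu> z 1 2 = IIfund g X h NM \<nu> z 2 1"
  using II_Gv D3[of z 1 2] by (simp add: fld_DF)

lemma I_sym: "z \<in> \<Omega> \<Longrightarrow> Ifund g X h z 1 2 = Ifund g X h z 2 1"
  using I_Gv Gv_sym[OF Xz] by metis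

lemma II_vals:
  assumes z: "z \<in> \<Omega>"
  shows "IIfund g X h NM \<nu> z 1 1 = 2 * \<rho> z" "IIfund g X h NM \<nu> z 2 2 = 2 * \<rho> z"
    "IIfund g X h NM \<nu> z 1 2 = 0" "IIfund g X h NM \<nu> z 2 1 = 0"
proof -
  have c: "qf (IIfund g X h NM \<nu> z) a = 2 * \<rho> z * (cmod a)\<^sup>2" for a using II_conf z by blast
  show a: "IIfund g X h NM \<nu> z 1 1 = 2 * \<rho> z" using c[of 1] by (simp add: qf_1)
  show b: "IIfund g X h NM \<nu> z 2 2 = 2 * \<rho> z" using c[of \<i>] by (simp add: qf_i)
  have m: "cmod (1 + \<i>) ^ 2 = 2" by (simp add: cmod_def)
  have "IIfund g X h NM \<nu> z 1 2 + IIfund g X h NM \<nu> z 2 1 = 0"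
    using c[of "1 + \<i>"] a b m by (simp add: qf_1i)
  then show "IIfund g X h NM \<nu> z 1 2 = 0" "IIfund g X h NM \<nu> z 2 1 = 0" using II_sym[OF z] by simp_all
qed

lemma rho_pos: "z \<in> \<Omega> \<Longrightarrow> \<rho> z > 0"
proof -
  assume z: "z \<in> \<Omega>"
  have "qf (IIfund g X h NM \<nu> z) 1 > 0" using II_posdef z by simp
  then show ?thesis using II_vals(1)[OF z] by (simp add: qf_1)
qed

lemma E_val:
  assumes z: "z \<in> \<Omega>"
  shows "E z = Complex ((Ifund g X h z 1 1 - Ifund g X h z 2 2) / 4) (- Ifund g X h z 1 2 / 2)"
proof -
  have c: "qf (Ifund g X h z) a = 2 * Re (E z * a\<^sup>2) + 2 * F z * (cmod a)\<^sup>2" for a using I_conf z by blast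
  have a: "Ifund g X h z 1 1 = 2 * Re (E z) + 2 * F z" using c[of 1] by (simp add: qf_1)
  have b: "Ifund g X h z 2 2 = - 2 * Re (E z) + 2 * F z" using c[of \<i>] by (simp add: qf_i power2_eq_square)
  have m: "cmod (1 + \<i>) ^ 2 = 2" by (simp add: cmod_def)
  have e: "Re (E z * (1 + \<i>)\<^sup>2) = - 2 * Im (E z)" by (simp add: power2_eq_square algebra_simps)
  have "Ifund g X h z 1 1 + Ifund g X h z 1 2 + Ifund g X h z 2 1 + Ifund g X h z 2 2 = - 4 * Im (E z) + 4 * F z"
    using c[of "1 + \<i>"] m e by (simp add: qf_1i)
  then have "Ifund g X h z 1 2 = - 2 * Im (E z)" using a b I_sym[OF z] by simp
  then show ?thesis using a b by (simp add: complex_eq_iff)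
qed

lemma detI:
  assumes z: "z \<in> \<Omega>"
  shows "Ifund g X h z 1 1 * Ifund g X h z 2 2 - Ifund g X h z 1 2 * Ifund g X h z 1 2 = (2 * \<rho> z) * (2 * \<rho> z) / K"
proof -
  have k: "det2 (IIfund g X h NM \<nu> z) / det2 (Ifund g X h z) = K" using K_const z by (simp add: ext_curv_def)
  have d2: "det2 (IIfund g X h NM \<nu> z) = (2 * \<rho> z) * (2 * \<rho> z)" using II_vals[OF z] by (simp add: det2_def)
  have di: "det2 (Ifund g X h z) = Ifund g X h z 1 1 * Ifund g X h z 2 2 - Ifund g X h z 1 2 * Ifund g X h z 1 2"
    using I_sym[OF z] by (simp add: det2_def)
  have "det2 (Ifund g X h z) \<noteq> 0" using k K_pos by auto
  then show ?thesis using k d2 di K_pos by (simp add: field_simps)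
qed

end

context surf
begin

lemma DF_fdiff:
  assumes z: "z \<in> \<Omega>" and V: "smooth_on \<Omega> (V 1)" "smooth_on \<Omega> (V 2)" "smooth_on \<Omega> (V 3)"
  shows "fdiff (DF g X i V) z"
proof -
  have dc: "(\<lambda>v. chr g k a b (X v)) differentiable (at z)" if "k \<in> {1,2}" "a \<in> {1,2}" "b \<in> {1,2}" for k a b
    using chrX_diff[OF z that] .
  have dx: "xd X i a differentiable (at z)" for a using xd_diff[OF z] .
  have dV: "V b differentiable (at z)" if "b \<in> {1,2}" for b using that smooth_d0[OF V(1) z] smooth_d0[OF V(2) z] by auto
  have k12: "(\<lambda>v. cdv g X i V v k) differentiable (at z)" if k: "k \<in> {1,2}" for k
  proof -
    have e: "(\<lambda>v. cdv g X i V v k) = (\<lambda>v. pd i (V k) v + (\<Sum>a\<in>{1,2}. \<Sum>b\<in>{1,2}. chr g k a b (X v) * xd X i a v * V b v))"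
      using k by (auto simp: cdv_def)
    have "pd i (V k) differentiable (at z)" using k smooth_d1[OF V(1) z] smooth_d1[OF V(2) z] by auto
    then show ?thesis unfolding e using k
      by (intro differentiable_add differentiable_sum ballI differentiable_mult dc dx dV) auto
  qed
  have k3: "(\<lambda>v. cdv g X i V v 3) differentiable (at z)"
    using smooth_d1[OF V(3) z] by (simp add: cdv_def)
  show ?thesis unfolding fdiff_def DF_def using k12[of 1] k12[of 2] k3 by simp
qed

lemma Gv_diff:
  assumes z: "z \<in> \<Omega>" and V: "fdiff V z" and W: "fdiff W z"
  shows "(\<lambda>v. Gv g (X v) (fld V v) (fld W v)) differentiable (at z)"
proof -
  have e: "(\<lambda>v. Gv g (X v) (fld V v) (fld W v)) = (\<lambda>v. g 1 1 (X v) * V 1 v * W 1 v + g 1 2 (X v) * V 1 v * W 2 v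
     + g 2 1 (X v) * V 2 v * W 1 v + g 2 2 (X v) * V 2 v * W 2 v + V 3 v * W 3 v)"
    by (simp only: Gv_expand fld_def)
  show ?thesis unfolding e using V W gX_diff[OF z] by (simp add: fdiff_def)
qed

lemma psi_smooth: "smooth_on \<Omega> (psi X h j 1)" "smooth_on \<Omega> (psi X h j 2)" "smooth_on \<Omega> (psi X h j 3)"
proof -
  have a: "psi X h j 1 = pd j (\<lambda>v. coord 1 (X v))" "psi X h j 2 = pd j (\<lambda>v. coord 2 (X v))" "psi X h j 3 = pd j h"
    by (auto simp: psi_def xd_def[abs_def])
  show "smooth_on \<Omega> (psi X h j 1)" "smooth_on \<Omega> (psi X h j 2)" "smooth_on \<Omega> (psi X h j 3)"
    unfolding a by (auto intro: smooth_pd smooth_Xc h_smooth)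
qed

lemma nf_smooth: "smooth_on \<Omega> (nf NM \<nu> 1)" "smooth_on \<Omega> (nf NM \<nu> 2)" "smooth_on \<Omega> (nf NM \<nu> 3)"
proof -
  have a: "nf NM \<nu> 1 = (\<lambda>v. coord 1 (NM v))" "nf NM \<nu> 2 = (\<lambda>v. coord 2 (NM v))" "nf NM \<nu> 3 = \<nu>"
    by (auto simp: nf_def)
  show "smooth_on \<Omega> (nf NM \<nu> 1)" "smooth_on \<Omega> (nf NM \<nu> 2)" "smooth_on \<Omega> (nf NM \<nu> 3)"
    unfolding a by (auto intro: smooth_Nc \<nu>_smooth)
qed

lemma Ifun_diff:
  assumes z: "z \<in> \<Omega>"
  shows "(\<lambda>v. Ifund g X h v i j) differentiable (at z)"
  by (rule diff_local[OF Gv_diff[OF z psi_fdiff[OF z] psi_fdiff[OF z]] \<Omega>_open z]) (simp add: I_Gv)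

lemma IIfun_diff:
  assumes z: "z \<in> \<Omega>"
  shows "(\<lambda>v. IIfund g X h NM \<nu> v i j) differentiable (at z)"
  by (rule diff_local[OF Gv_diff[OF z DF_fdiff[OF z psi_smooth] nf_fdiff[OF z]] \<Omega>_open z]) (simp add: II_Gv)

end

context lem6
begin

lemma KD:
  assumes z: "z \<in> \<Omega>"
  shows "2 * IIfund g X h NM \<nu> z 1 1 * pd k (\<lambda>v. IIfund g X h NM \<nu> v 1 1) z
    = K * (pd k (\<lambda>v. Ifund g X h v 1 1) z * Ifund g X h z 2 2 + Ifund g X h z 1 1 * pd k (\<lambda>v. Ifund g X h v 2 2) z
       - 2 * Ifund g X h z 1 2 * pd k (\<lambda>v. Ifund g X h v 1 2) z)"
proof -
  have "pd k (\<lambda>v. IIfund g X h NM \<nu> v 1 1 * IIfund g X h NM \<nu> v 1 1) z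
      = pd k (\<lambda>v. K * (Ifund g X h v 1 1 * Ifund g X h v 2 2 - Ifund g X h v 1 2 * Ifund g X h v 1 2)) z"
  proof (rule pd_local[OF \<Omega>_open z])
    fix v assume v: "v \<in> \<Omega>"
    show "IIfund g X h NM \<nu> v 1 1 * IIfund g X h NM \<nu> v 1 1
      = K * (Ifund g X h v 1 1 * Ifund g X h v 2 2 - Ifund g X h v 1 2 * Ifund g X h v 1 2)"
      using detI[OF v] II_vals(1)[OF v] K_pos by simp
  qed
  then show ?thesis
    using Ifun_diff[OF z] IIfun_diff[OF z]
    by (simp add: pd_mult pd_cmult pd_diff pd_const algebra_simps)
qed

lemma chrI_sym:
  assumes z: "z \<in> \<Omega>"
  shows "Gv g (X z) (cdv g X 2 (psi X h 1) z) Y = Gv g (X z) (cdv g X 1 (psi X h 2) z) Y"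
  using D3[OF z, of 1 2] by simp

lemma D4':
  assumes z: "z \<in> \<Omega>"
  shows "pd k (\<lambda>v. Ifund g X h v i j) z = Gv g (X z) (cdv g X k (psi X h i) z) (fld (psi X h j) z)
      + Gv g (X z) (cdv g X k (psi X h j) z) (fld (psi X h i) z)"
  using D4[OF z] Gv_sym[OF Xz[OF z]] by metis

lemma koszul:
  assumes z: "z \<in> \<Omega>"
  defines "G \<equiv> Gv g (X z)" and "P \<equiv> \<lambda>j. fld (psi X h j) z"
  shows "G (cdv g X 1 (psi X h 1) z) (P 1) = pd 1 (\<lambda>v. Ifund g X h v 1 1) z / 2"
    "G (cdv g X 1 (psi X h 1) z) (P 2) = pd 1 (\<lambda>v. Ifund g X h v 1 2) z - pd 2 (\<lambda>v. Ifund g X h v 1 1) z / 2"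
    "G (cdv g X 1 (psi X h 2) z) (P 1) = pd 2 (\<lambda>v. Ifund g X h v 1 1) z / 2"
    "G (cdv g X 1 (psi X h 2) z) (P 2) = pd 1 (\<lambda>v. Ifund g X h v 2 2) z / 2"
    "G (cdv g X 2 (psi X h 2) z) (P 1) = pd 2 (\<lambda>v. Ifund g X h v 1 2) z - pd 1 (\<lambda>v. Ifund g X h v 2 2) z / 2"
    "G (cdv g X 2 (psi X h 2) z) (P 2) = pd 2 (\<lambda>v. Ifund g X h v 2 2) z / 2"
proof -
  note d = D4'[OF z]
  note cs = chrI_sym[OF z]
  show "G (cdv g X 1 (psi X h 1) z) (P 1) = pd 1 (\<lambda>v. Ifund g X h v 1 1) z / 2"
    using d[of 1 1 1] unfolding G_def P_def by simp
  show "G (cdv g X 1 (psi X h 1) z) (P 2) = pd 1 (\<lambda>v. Ifund g X h v 1 2) z - pd 2 (\<lambda>v. Ifund g X h v 1 1) z / 2"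
    using d[of 1 1 2] d[of 2 1 1] cs unfolding G_def P_def by simp
  show "G (cdv g X 1 (psi X h 2) z) (P 1) = pd 2 (\<lambda>v. Ifund g X h v 1 1) z / 2"
    using d[of 2 1 1] cs unfolding G_def P_def by simp
  show "G (cdv g X 1 (psi X h 2) z) (P 2) = pd 1 (\<lambda>v. Ifund g X h v 2 2) z / 2"
    using d[of 1 2 2] unfolding G_def P_def by simp
  show "G (cdv g X 2 (psi X h 2) z) (P 1) = pd 2 (\<lambda>v. Ifund g X h v 1 2) z - pd 1 (\<lambda>v. Ifund g X h v 2 2) z / 2"
    using d[of 2 1 2] d[of 1 2 2] cs unfolding G_def P_def by simp
  show "G (cdv g X 2 (psi X h 2) z) (P 2) = pd 2 (\<lambda>v. Ifund g X h v 2 2) z / 2"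
    using d[of 2 2 2] unfolding G_def P_def by simp
qed

lemma dI_pos:
  assumes z: "z \<in> \<Omega>"
  shows "Ifund g X h z 1 1 * Ifund g X h z 2 2 - Ifund g X h z 1 2 * Ifund g X h z 1 2 > 0"
  using detI[OF z] rho_pos[OF z] K_pos by simp

lemma pars:
  assumes z: "z \<in> \<Omega>"
  shows "Gv g (X z) Y V = (Ifund g X h z 2 2 * Gv g (X z) V (fld (psi X h 1) z) * Gv g (X z) Y (fld (psi X h 1) z)
       - Ifund g X h z 1 2 * (Gv g (X z) V (fld (psi X h 1) z) * Gv g (X z) Y (fld (psi X h 2) z)
             + Gv g (X z) V (fld (psi X h 2) z) * Gv g (X z) Y (fld (psi X h 1) z))
       + Ifund g X h z 1 1 * Gv g (X z) V (fld (psi X h 2) z) * Gv g (X z) Y (fld (psi X h 2) z))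
       / (Ifund g X h z 1 1 * Ifund g X h z 2 2 - Ifund g X h z 1 2 * Ifund g X h z 1 2)
       + Gv g (X z) V (fld (nf NM \<nu>) z) * Gv g (X z) Y (fld (nf NM \<nu>) z)"
proof -
  have nz: "Gv g (X z) (fld (psi X h 1) z) (fld (psi X h 1) z) * Gv g (X z) (fld (psi X h 2) z) (fld (psi X h 2) z)
      - Gv g (X z) (fld (psi X h 1) z) (fld (psi X h 2) z) * Gv g (X z) (fld (psi X h 1) z) (fld (psi X h 2) z) \<noteq> 0"
    using dI_pos[OF z] I_Gv[OF z] by (metis less_irrefl)
  show ?thesis
    using parseval[OF Xz[OF z] NP[OF z, of 1] NP[OF z, of 2] NN[OF z] nz, of Y V] I_Gv[OF z] by simp
qed

definition Tv :: "nat \<Rightarrow> real" where "Tv = (\<lambda>k. if k = 3 then 1 else 0)"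

lemma GT: "Gv g w Tv Y = Y 3" by (simp add: Gv_expand Tv_def)

lemma RH:
  assumes z: "z \<in> \<Omega>" and ij: "i \<in> {1,2}" "j \<in> {1,2}"
  shows "pd i (pd j h) z = (Ifund g X h z 2 2 * Gv g (X z) (cdv g X i (psi X h j) z) (fld (psi X h 1) z) * pd 1 h z
       - Ifund g X h z 1 2 * (Gv g (X z) (cdv g X i (psi X h j) z) (fld (psi X h 1) z) * pd 2 h z
             + Gv g (X z) (cdv g X i (psi X h j) z) (fld (psi X h 2) z) * pd 1 h z)
       + Ifund g X h z 1 1 * Gv g (X z) (cdv g X i (psi X h j) z) (fld (psi X h 2) z) * pd 2 h z)
       / (Ifund g X h z 1 1 * Ifund g X h z 2 2 - Ifund g X h z 1 2 * Ifund g X h z 1 2)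
       + IIfund g X h NM \<nu> z i j * \<nu> z"
proof -
  have a: "Gv g (X z) Tv (cdv g X i (psi X h j) z) = pd i (pd j h) z"
    by (simp add: GT cdv3 psi_def)
  have "psi X h j 3 = pd j h" by (auto simp: psi_def)
  show ?thesis using pars[OF z, of Tv "cdv g X i (psi X h j) z"] a II_Gv[OF z]
    by (simp add: GT fld_simps psi_simps nf_simps fld_DF)
qed

definition tau1 :: "complex \<Rightarrow> real" where
  "tau1 v = (Ifund g X h v 2 2 * pd 1 h v - Ifund g X h v 1 2 * pd 2 h v)
     / (Ifund g X h v 1 1 * Ifund g X h v 2 2 - Ifund g X h v 1 2 * Ifund g X h v 1 2)"

definition tau2 :: "complex \<Rightarrow> real" where
  "tau2 v = (Ifund g X h v 1 1 * pd 2 h v - Ifund g X h v 1 2 * pd 1 h v)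
     / (Ifund g X h v 1 1 * Ifund g X h v 2 2 - Ifund g X h v 1 2 * Ifund g X h v 1 2)"

lemma RN:
  assumes z: "z \<in> \<Omega>"
  shows "pd 1 \<nu> z = - IIfund g X h NM \<nu> z 1 1 * tau1 z" "pd 2 \<nu> z = - IIfund g X h NM \<nu> z 1 1 * tau2 z"
proof -
  have a: "Gv g (X z) Tv (cdv g X i (nf NM \<nu>) z) = pd i \<nu> z" for i
  proof -
    have "nf NM \<nu> 3 = \<nu>" by (auto simp: nf_def)
    then show ?thesis by (simp add: GT cdv3)
  qed
  note iv = II_vals[OF z]
  have dn: "Ifund g X h z 1 1 * Ifund g X h z 2 2 - Ifund g X h z 1 2 * Ifund g X h z 1 2 \<noteq> 0"
    using dI_pos[OF z] by simp
  show "pd 1 \<nu> z = - IIfund g X h NM \<nu> z 1 1 * tau1 z"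
    using pars[OF z, of Tv "cdv g X 1 (nf NM \<nu>) z"] a[of 1] D1[OF z, of 1 1] D1[OF z, of 2 1] D2[OF z, of 1] iv dn
    by (simp add: GT fld_simps psi_simps nf_simps tau1_def field_simps)
  show "pd 2 \<nu> z = - IIfund g X h NM \<nu> z 1 1 * tau2 z"
    using pars[OF z, of Tv "cdv g X 2 (nf NM \<nu>) z"] a[of 2] D1[OF z, of 1 2] D1[OF z, of 2 2] D2[OF z, of 2] iv dn
    by (simp add: GT fld_simps psi_simps nf_simps tau2_def field_simps)
qed

lemma R1:
  assumes z: "z \<in> \<Omega>"
  shows "(Ifund g X h z 2 2 * pd 1 h z * pd 1 h z - 2 * Ifund g X h z 1 2 * pd 1 h z * pd 2 h z
       + Ifund g X h z 1 1 * pd 2 h z * pd 2 h z)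
       / (Ifund g X h z 1 1 * Ifund g X h z 2 2 - Ifund g X h z 1 2 * Ifund g X h z 1 2) + \<nu> z * \<nu> z = 1"
proof -
  have "Gv g (X z) Tv Tv = 1" by (simp only: GT) (simp add: Tv_def)
  then show ?thesis using pars[OF z, of Tv Tv]
    by (simp add: GT fld_simps psi_simps nf_simps algebra_simps)
qed

lemma tau_eqs:
  assumes v: "v \<in> \<Omega>"
  shows "Ifund g X h v 1 1 * tau1 v + Ifund g X h v 1 2 * tau2 v = pd 1 h v"
    "Ifund g X h v 1 2 * tau1 v + Ifund g X h v 2 2 * tau2 v = pd 2 h v"
proof -
  have dn: "Ifund g X h v 1 1 * Ifund g X h v 2 2 - Ifund g X h v 1 2 * Ifund g X h v 1 2 \<noteq> 0"
    using dI_pos[OF v] by simp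
  show "Ifund g X h v 1 1 * tau1 v + Ifund g X h v 1 2 * tau2 v = pd 1 h v"
    unfolding tau1_def tau2_def by (rule inv2(1)[OF dn])
  show "Ifund g X h v 1 2 * tau1 v + Ifund g X h v 2 2 * tau2 v = pd 2 h v"
    unfolding tau1_def tau2_def by (rule inv2(2)[OF dn])
qed

lemma tau_diff:
  assumes z: "z \<in> \<Omega>"
  shows "tau1 differentiable (at z)" "tau2 differentiable (at z)"
proof -
  have dn: "Ifund g X h z 1 1 * Ifund g X h z 2 2 - Ifund g X h z 1 2 * Ifund g X h z 1 2 \<noteq> 0"
    using dI_pos[OF z] by simp
  note d = Ifun_diff[OF z] smooth_d1[OF h_smooth z]
  show "tau1 differentiable (at z)" unfolding tau1_def[abs_def]
    using d dn by (intro differentiable_divide differentiable_diff differentiable_mult) auto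
  show "tau2 differentiable (at z)" unfolding tau2_def[abs_def]
    using d dn by (intro differentiable_divide differentiable_diff differentiable_mult) auto
qed

lemma F2:
  assumes z: "z \<in> \<Omega>"
  shows "lapII \<rho> (\<lambda>w. complex_of_real (\<nu> w)) z
     = complex_of_real (- 2 * mean_curv (Ifund g X h z) (IIfund g X h NM \<nu> z) * \<nu> z)"
proof -
  define a where "a = Ifund g X h z 1 1"
  define b where "b = Ifund g X h z 1 2"
  define c where "c = Ifund g X h z 2 2"
  define d where "d = a*c - b*b"
  define a1 where "a1 = pd 1 (\<lambda>v. Ifund g X h v 1 1) z"
  define a2 where "a2 = pd 2 (\<lambda>v. Ifund g X h v 1 1) z"
  define b1 where "b1 = pd 1 (\<lambda>v. Ifund g X h v 1 2) z"
  define b2 where "b2 = pd 2 (\<lambda>v. Ifund g X h v 1 2) z"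
  define c1 where "c1 = pd 1 (\<lambda>v. Ifund g X h v 2 2) z"
  define c2 where "c2 = pd 2 (\<lambda>v. Ifund g X h v 2 2) z"
  define lam where "lam = IIfund g X h NM \<nu> z 1 1"
  define L1 where "L1 = pd 1 (\<lambda>v. IIfund g X h NM \<nu> v 1 1) z"
  define L2 where "L2 = pd 2 (\<lambda>v. IIfund g X h NM \<nu> v 1 1) z"
  define t11 where "t11 = pd 1 tau1 z"
  define t12 where "t12 = pd 2 tau1 z"
  define t21 where "t21 = pd 1 tau2 z"
  define t22 where "t22 = pd 2 tau2 z"
  define h11 where "h11 = pd 1 (pd 1 h) z"
  define h12 where "h12 = pd 2 (pd 1 h) z"
  define h21 where "h21 = pd 1 (pd 2 h) z"
  define h22 where "h22 = pd 2 (pd 2 h) z"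
  have lamv: "lam = 2 * \<rho> z" using II_vals[OF z] lam_def by simp
  have lpos: "lam > 0" using rho_pos[OF z] lamv by simp
  have dpos: "d > 0" using dI_pos[OF z] unfolding d_def a_def b_def c_def by simp
  note dI = Ifun_diff[OF z] IIfun_diff[OF z] tau_diff[OF z]
  have ddI: "(\<lambda>v. - IIfund g X h NM \<nu> v 1 1) differentiable (at z)" using dI by simp
  have n11: "pd 1 (pd 1 \<nu>) z = - (L1 * tau1 z + lam * t11)"
  proof -
    have "pd 1 (pd 1 \<nu>) z = pd 1 (\<lambda>v. (- IIfund g X h NM \<nu> v 1 1) * tau1 v) z"
      by (rule pd_local[OF \<Omega>_open z]) (simp add: RN(1))
    also have "\<dots> = (- IIfund g X h NM \<nu> z 1 1) * pd 1 tau1 z + pd 1 (\<lambda>v. - IIfund g X h NM \<nu> v 1 1) z * tau1 z"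
      by (rule pd_mult[OF ddI tau_diff(1)[OF z]])
    also have "\<dots> = - (L1 * tau1 z + lam * t11)"
      using pd_minus[OF IIfun_diff[OF z], of 1 1 1] by (simp add: L1_def lam_def t11_def algebra_simps)
    finally show ?thesis .
  qed
  have n22: "pd 2 (pd 2 \<nu>) z = - (L2 * tau2 z + lam * t22)"
  proof -
    have "pd 2 (pd 2 \<nu>) z = pd 2 (\<lambda>v. (- IIfund g X h NM \<nu> v 1 1) * tau2 v) z"
      by (rule pd_local[OF \<Omega>_open z]) (simp add: RN(2))
    also have "\<dots> = (- IIfund g X h NM \<nu> z 1 1) * pd 2 tau2 z + pd 2 (\<lambda>v. - IIfund g X h NM \<nu> v 1 1) z * tau2 z"
      by (rule pd_mult[OF ddI tau_diff(2)[OF z]])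
    also have "\<dots> = - (L2 * tau2 z + lam * t22)"
      using pd_minus[OF IIfun_diff[OF z], of 2 1 1] by (simp add: L2_def lam_def t22_def algebra_simps)
    finally show ?thesis .
  qed
  have te1: "pd k (pd 1 h) z = pd k (\<lambda>v. Ifund g X h v 1 1 * tau1 v + Ifund g X h v 1 2 * tau2 v) z" for k
    by (rule pd_local[OF \<Omega>_open z]) (simp add: tau_eqs(1))
  have te2: "pd k (pd 2 h) z = pd k (\<lambda>v. Ifund g X h v 1 2 * tau1 v + Ifund g X h v 2 2 * tau2 v) z" for k
    by (rule pd_local[OF \<Omega>_open z]) (simp add: tau_eqs(2))
  have T11: "a1*tau1 z + b1*tau2 z + a*t11 + b*t21 = h11"
    using te1[of 1] by (simp add: pd_add pd_mult dI a_def b_def a1_def b1_def t11_def t21_def h11_def algebra_simps)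
  have T21: "b1*tau1 z + c1*tau2 z + b*t11 + c*t21 = h21"
    using te2[of 1] by (simp add: pd_add pd_mult dI c_def b_def c1_def b1_def t11_def t21_def h21_def algebra_simps)
  have T12: "a2*tau1 z + b2*tau2 z + a*t12 + b*t22 = h12"
    using te1[of 2] by (simp add: pd_add pd_mult dI a_def b_def a2_def b2_def t12_def t22_def h12_def algebra_simps)
  have T22: "b2*tau1 z + c2*tau2 z + b*t12 + c*t22 = h22"
    using te2[of 2] by (simp add: pd_add pd_mult dI c_def b_def c2_def b2_def t12_def t22_def h22_def algebra_simps)
  have tau1v: "tau1 z = (c * pd 1 h z - b * pd 2 h z)/d" by (simp add: tau1_def a_def b_def c_def d_def)
  have tau2v: "tau2 z = (a * pd 2 h z - b * pd 1 h z)/d" by (simp add: tau2_def a_def b_def c_def d_def)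
  define k111 where "k111 = Gv g (X z) (cdv g X 1 (psi X h 1) z) (fld (psi X h 1) z)"
  define k112 where "k112 = Gv g (X z) (cdv g X 1 (psi X h 1) z) (fld (psi X h 2) z)"
  define k121 where "k121 = Gv g (X z) (cdv g X 1 (psi X h 2) z) (fld (psi X h 1) z)"
  define k122 where "k122 = Gv g (X z) (cdv g X 1 (psi X h 2) z) (fld (psi X h 2) z)"
  define k221 where "k221 = Gv g (X z) (cdv g X 2 (psi X h 2) z) (fld (psi X h 1) z)"
  define k222 where "k222 = Gv g (X z) (cdv g X 2 (psi X h 2) z) (fld (psi X h 2) z)"
  have kv: "k111 = a1/2" "k112 = b1 - a2/2" "k121 = a2/2" "k122 = c1/2" "k221 = b2 - c1/2" "k222 = c2/2"
    using koszul[OF z] unfolding k111_def k112_def k121_def k122_def k221_def k222_def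
      a1_def a2_def b1_def b2_def c1_def c2_def by simp_all
  note cs = chrI_sym[OF z]
  note iv = II_vals[OF z]
  have hh1: "pd 1 h z = pd 1 h z" ..
  have rh: "\<And>i j. i \<in> {1,2} \<Longrightarrow> j \<in> {1,2} \<Longrightarrow> pd i (pd j h) z =
       (c * Gv g (X z) (cdv g X i (psi X h j) z) (fld (psi X h 1) z) * pd 1 h z
       - b * (Gv g (X z) (cdv g X i (psi X h j) z) (fld (psi X h 1) z) * pd 2 h z
             + Gv g (X z) (cdv g X i (psi X h j) z) (fld (psi X h 2) z) * pd 1 h z)
       + a * Gv g (X z) (cdv g X i (psi X h j) z) (fld (psi X h 2) z) * pd 2 h z) / d
       + IIfund g X h NM \<nu> z i j * \<nu> z"
    using RH[OF z] unfolding a_def b_def c_def d_def by simp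
  have H11: "h11 = (a1/2)*tau1 z + (b1 - a2/2)*tau2 z + lam*\<nu> z"
    using rh[of 1 1] unfolding h11_def tau1v tau2v pars_form k111_def[symmetric] k112_def[symmetric] kv
      lam_def by simp
  have H12: "h12 = (a2/2)*tau1 z + (c1/2)*tau2 z"
    using rh[of 2 1] iv unfolding h12_def tau1v tau2v cs pars_form k121_def[symmetric] k122_def[symmetric] kv
    by simp
  have H21: "h21 = (a2/2)*tau1 z + (c1/2)*tau2 z"
    using rh[of 1 2] iv unfolding h21_def tau1v tau2v pars_form k121_def[symmetric] k122_def[symmetric] kv
    by simp
  have H22: "h22 = (b2 - c1/2)*tau1 z + (c2/2)*tau2 z + lam*\<nu> z"
    using rh[of 2 2] iv unfolding h22_def tau1v tau2v pars_form k221_def[symmetric] k222_def[symmetric] kv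
      lam_def by simp
  have KD1: "2*lam*L1 = K*(a1*c + a*c1 - 2*b*b1)"
    using KD[OF z, of 1] unfolding lam_def L1_def a_def b_def c_def a1_def b1_def c1_def by (simp add: algebra_simps)
  have KD2: "2*lam*L2 = K*(a2*c + a*c2 - 2*b*b2)"
    using KD[OF z, of 2] unfolding lam_def L2_def a_def b_def c_def a2_def b2_def c2_def by (simp add: algebra_simps)
  have ll: "lam * lam = K * d" using detI[OF z] lamv K_pos unfolding d_def a_def b_def c_def by (simp add: field_simps)
  have alg: "(- (L1*tau1 z + lam*t11) - (L2*tau2 z + lam*t22)) / lam = - 2 * (lam*(a + c)/(2*d)) * \<nu> z"
    by (rule algF2[OF d_def _ _ _ ll KD1 KD2 T11 T21 T12 T22 H11 H12 H21 H22]) (use dpos lpos K_pos in auto)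
  have mc: "mean_curv (Ifund g X h z) (IIfund g X h NM \<nu> z) = lam*(a + c)/(2*d)"
    using iv I_sym[OF z] unfolding mean_curv_def det2_def lam_def a_def b_def c_def d_def
    by (simp add: algebra_simps)
  have "lapII \<rho> (\<lambda>w. complex_of_real (\<nu> w)) z = complex_of_real ((pd 1 (pd 1 \<nu>) z + pd 2 (pd 2 \<nu>) z) / (2 * \<rho> z))"
    by (rule lap_real[OF \<Omega>_open z \<nu>_smooth])
  also have "(pd 1 (pd 1 \<nu>) z + pd 2 (pd 2 \<nu>) z) / (2 * \<rho> z) = - 2 * mean_curv (Ifund g X h z) (IIfund g X h NM \<nu> z) * \<nu> z"
    unfolding n11 n22 mc lamv[symmetric] using alg by (simp add: algebra_simps)
  finally show ?thesis .
qed

lemma B_eq: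
  assumes z: "z \<in> \<Omega>" and j: "j \<in> {1,2}"
  shows "Gv g (X z) (cdv g X k (DF g X i (nf NM \<nu>)) z) (fld (psi X h j) z)
     = - pd k (\<lambda>v. IIfund g X h NM \<nu> v i j) z - Gv g (X z) (cdv g X i (nf NM \<nu>) z) (cdv g X k (psi X h j) z)"
proof -
  have "pd k (\<lambda>v. Gv g (X v) (fld (DF g X i (nf NM \<nu>)) v) (fld (psi X h j) v)) z
      = pd k (\<lambda>v. - IIfund g X h NM \<nu> v i j) z"
    by (rule pd_local[OF \<Omega>_open z]) (simp add: fld_DF D1[OF _ j])
  moreover have "pd k (\<lambda>v. Gv g (X v) (fld (DF g X i (nf NM \<nu>)) v) (fld (psi X h j) v)) z
      = Gv g (X z) (cdv g X k (DF g X i (nf NM \<nu>)) z) (fld (psi X h j) z)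
        + Gv g (X z) (cdv g X i (nf NM \<nu>) z) (cdv g X k (psi X h j) z)"
    using Gv_comp[OF z DF_fdiff[OF z nf_smooth] psi_fdiff[OF z]] by (simp add: fld_DF)
  moreover have "pd k (\<lambda>v. - IIfund g X h NM \<nu> v i j) z = - pd k (\<lambda>v. IIfund g X h NM \<nu> v i j) z"
    by (rule pd_minus[OF IIfun_diff[OF z]])
  ultimately show ?thesis by simp
qed

lemma Gv_diff_left: "Gv g w A P - Gv g w B P = Gv g w (\<lambda>k. A k - B k) P"
  by (simp add: Gv_expand algebra_simps)

lemma gM_sym: "w \<in> U \<Longrightarrow> gM g w u v = gM g w v u"
  using g_sym by (simp add: gM_def sum12 algebra_simps)

lemma A_eq:
  assumes z: "z \<in> \<Omega>" and j: "j \<in> {1,2}"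
  shows "Gv g (X z) (cdv g X 1 (DF g X 2 (nf NM \<nu>)) z) (fld (psi X h j) z)
       - Gv g (X z) (cdv g X 2 (DF g X 1 (nf NM \<nu>)) z) (fld (psi X h j) z)
     = gauss_curv g (X z) * \<nu> z * (pd 1 h z * Ifund g X h z 2 j - pd 2 h z * Ifund g X h z 1 j)"
proof -
  define \<Delta> where "\<Delta> = (\<lambda>k. cdv g X 1 (DF g X 2 (nf NM \<nu>)) z k - cdv g X 2 (DF g X 1 (nf NM \<nu>)) z k)"
  have d3: "\<Delta> 3 = 0" unfolding \<Delta>_def by (rule commutator3[where V="nf NM \<nu>", OF z nf_smooth(3)])
  have dk: "\<Delta> k = (\<Sum>a\<in>{1,2}. \<Sum>b\<in>{1,2}. \<Sum>l\<in>{1,2}. coord a (pd 1 X z) * coord b (pd 2 X z) * coord l (NM z) * Rc g k l a b (X z))"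
    if k: "k \<in> {1,2}" for k
  proof -
    have "\<Delta> k = (\<Sum>a\<in>{1,2}. \<Sum>b\<in>{1,2}. \<Sum>l\<in>{1,2}. xd X 1 a z * xd X 2 b z * nf NM \<nu> l z * Rc g k l a b (X z))"
      unfolding \<Delta>_def by (rule commutator[where V="nf NM \<nu>", OF z k nf_smooth(1) nf_smooth(2)])
    then show ?thesis by (simp add: xd_pd[OF z] sum12 nf_simps)
  qed
  have "Gv g (X z) \<Delta> (fld (psi X h j) z)
      = (\<Sum>k\<in>{1,2}. \<Sum>m\<in>{1,2}. g k m (X z) *
           (\<Sum>a\<in>{1,2}. \<Sum>b\<in>{1,2}. \<Sum>l\<in>{1,2}. coord a (pd 1 X z) * coord b (pd 2 X z) * coord l (NM z) * Rc g k l a b (X z))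
           * coord m (pd j X z))"
    unfolding Gv_def using dk[of 1] dk[of 2] d3 j by (simp add: fld_simps psi_def xd_pd[OF z] sum12)
  also have "\<dots> = gauss_curv g (X z) * (gM g (X z) (pd 2 X z) (NM z) * gM g (X z) (pd 1 X z) (pd j X z)
        - gM g (X z) (pd 1 X z) (NM z) * gM g (X z) (pd 2 X z) (pd j X z))"
    by (rule curv_formula[OF Xz[OF z]])
  also have "\<dots> = gauss_curv g (X z) * \<nu> z * (pd 1 h z * Ifund g X h z 2 j - pd 2 h z * Ifund g X h z 1 j)"
  proof -
    have n: "gM g (X z) (pd i X z) (NM z) = - \<nu> z * pd i h z" if "i \<in> {1,2}" for i
      using N_normal z that gM_sym[OF Xz[OF z]] by (metis add.commute add_eq_0_iff minus_mult_left)
    have I: "gM g (X z) (pd i X z) (pd j X z) = Ifund g X h z i j - pd i h z * pd j h z" for i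
      by (simp add: Ifund_def)
    have n1: "gM g (X z) (pd 1 X z) (NM z) = - \<nu> z * pd 1 h z" using n by simp
    have n2: "gM g (X z) (pd 2 X z) (NM z) = - \<nu> z * pd 2 h z" using n by simp
    show ?thesis unfolding n1 n2 I[of 1] I[of 2] by (simp add: algebra_simps)
  qed
  finally show ?thesis unfolding \<Delta>_def Gv_diff_left .
qed

lemma F13:
  assumes z: "z \<in> \<Omega>"
  shows "lapII \<rho> (\<lambda>w. complex_of_real (h w)) z
        = complex_of_real ((2 * K - gauss_curv g (X z) * (1 - (\<nu> z)\<^sup>2)) * \<nu> z / K)"
    "dzb E z = complex_of_real (- gauss_curv g (X z) * \<nu> z * \<rho> z / K) * dz (\<lambda>w. complex_of_real (h w)) z"
proof -
  define a where "a = Ifund g X h z 1 1"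
  define b where "b = Ifund g X h z 1 2"
  define c where "c = Ifund g X h z 2 2"
  define d where "d = a*c - b*b"
  define a1 where "a1 = pd 1 (\<lambda>v. Ifund g X h v 1 1) z"
  define a2 where "a2 = pd 2 (\<lambda>v. Ifund g X h v 1 1) z"
  define b1 where "b1 = pd 1 (\<lambda>v. Ifund g X h v 1 2) z"
  define b2 where "b2 = pd 2 (\<lambda>v. Ifund g X h v 1 2) z"
  define c1 where "c1 = pd 1 (\<lambda>v. Ifund g X h v 2 2) z"
  define c2 where "c2 = pd 2 (\<lambda>v. Ifund g X h v 2 2) z"
  define lam where "lam = IIfund g X h NM \<nu> z 1 1"
  define L1 where "L1 = pd 1 (\<lambda>v. IIfund g X h NM \<nu> v 1 1) z"
  define L2 where "L2 = pd 2 (\<lambda>v. IIfund g X h NM \<nu> v 1 1) z"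
  define h1 where "h1 = pd 1 h z"
  define h2 where "h2 = pd 2 h z"
  define ka where "ka = gauss_curv g (X z)"
  have lamv: "lam = 2 * \<rho> z" using II_vals[OF z] lam_def by simp
  have lpos: "lam > 0" using rho_pos[OF z] lamv by simp
  have dpos: "d > 0" using dI_pos[OF z] unfolding d_def a_def b_def c_def by simp
  define k111 where "k111 = Gv g (X z) (cdv g X 1 (psi X h 1) z) (fld (psi X h 1) z)"
  define k112 where "k112 = Gv g (X z) (cdv g X 1 (psi X h 1) z) (fld (psi X h 2) z)"
  define k121 where "k121 = Gv g (X z) (cdv g X 1 (psi X h 2) z) (fld (psi X h 1) z)"
  define k122 where "k122 = Gv g (X z) (cdv g X 1 (psi X h 2) z) (fld (psi X h 2) z)"
  define k221 where "k221 = Gv g (X z) (cdv g X 2 (psi X h 2) z) (fld (psi X h 1) z)"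
  define k222 where "k222 = Gv g (X z) (cdv g X 2 (psi X h 2) z) (fld (psi X h 2) z)"
  have kv: "k111 = a1/2" "k112 = b1 - a2/2" "k121 = a2/2" "k122 = c1/2" "k221 = b2 - c1/2" "k222 = c2/2"
    using koszul[OF z] unfolding k111_def k112_def k121_def k122_def k221_def k222_def
      a1_def a2_def b1_def b2_def c1_def c2_def by simp_all
  note cs = chrI_sym[OF z]
  note iv = II_vals[OF z]
  have ll: "lam * lam = K * d" using detI[OF z] lamv K_pos unfolding d_def a_def b_def c_def by (simp add: field_simps)
  have KD1: "2*lam*L1 = K*(a1*c + a*c1 - 2*b*b1)"
    using KD[OF z, of 1] unfolding lam_def L1_def a_def b_def c_def a1_def b1_def c1_def by (simp add: algebra_simps)
  have KD2: "2*lam*L2 = K*(a2*c + a*c2 - 2*b*b2)"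
    using KD[OF z, of 2] unfolding lam_def L2_def a_def b_def c_def a2_def b2_def c2_def by (simp add: algebra_simps)
  have pc: "Gv g (X z) (cdv g X i (nf NM \<nu>) z) V = (c * Gv g (X z) V (fld (psi X h 1) z) * (- IIfund g X h NM \<nu> z i 1)
       - b * (Gv g (X z) V (fld (psi X h 1) z) * (- IIfund g X h NM \<nu> z i 2) + Gv g (X z) V (fld (psi X h 2) z) * (- IIfund g X h NM \<nu> z i 1))
       + a * Gv g (X z) V (fld (psi X h 2) z) * (- IIfund g X h NM \<nu> z i 2)) / d" for i V
    using pars[OF z, of "cdv g X i (nf NM \<nu>) z" V] D1[OF z, of 1 i] D1[OF z, of 2 i] D2[OF z, of i]
    unfolding a_def b_def c_def d_def by simp
  have z0: "pd k (\<lambda>v. IIfund g X h NM \<nu> v i j) z = 0" if "(i = 1 \<and> j = 2) \<or> (i = 2 \<and> j = 1)" for k i j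
  proof -
    have "pd k (\<lambda>v. IIfund g X h NM \<nu> v i j) z = pd k (\<lambda>v. 0::real) z"
      by (rule pd_local[OF \<Omega>_open z]) (use that II_vals in auto)
    then show ?thesis by (simp add: pd_const)
  qed
  have z22: "pd k (\<lambda>v. IIfund g X h NM \<nu> v 2 2) z = pd k (\<lambda>v. IIfund g X h NM \<nu> v 1 1) z" for k
    by (rule pd_local[OF \<Omega>_open z]) (simp add: II_vals)
  have C1: "L2 + lam*(a*(b1 - a2/2) - b*(a1/2))/d - lam*(c*(a2/2) - b*(c1/2))/d = ka*\<nu> z*(h1*b - h2*a)"
  proof -
    have "Gv g (X z) (cdv g X 1 (DF g X 2 (nf NM \<nu>)) z) (fld (psi X h 1) z)
       - Gv g (X z) (cdv g X 2 (DF g X 1 (nf NM \<nu>)) z) (fld (psi X h 1) z) = ka*\<nu> z*(h1*b - h2*a)"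
      using A_eq[OF z, of 1] I_sym[OF z] unfolding ka_def h1_def h2_def a_def b_def by simp
    moreover have "Gv g (X z) (cdv g X 1 (DF g X 2 (nf NM \<nu>)) z) (fld (psi X h 1) z) = - (b*k111*lam - a*k112*lam)/d"
      using B_eq[OF z, where j=1 and k=1 and i=2] z0[where k=1 and i=2 and j=1] pc[of 2] iv
      unfolding k111_def k112_def lam_def using dpos by (simp add: field_simps)
    moreover have "Gv g (X z) (cdv g X 2 (DF g X 1 (nf NM \<nu>)) z) (fld (psi X h 1) z) = - L2 - (- c*k121*lam + b*k122*lam)/d"
      using B_eq[OF z, where j=1 and k=2 and i=1] pc[of 1] iv cs
      unfolding k121_def k122_def lam_def L2_def using dpos by (simp add: field_simps)
    ultimately have "- (b*k111*lam - a*k112*lam)/d - (- L2 - (- c*k121*lam + b*k122*lam)/d) = ka*\<nu> z*(h1*b - h2*a)"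
      by simp
    then show ?thesis unfolding kv by (simp add: algebra_simps diff_divide_distrib add_divide_distrib)
  qed
  have C2: "- L1 + lam*(a*(c1/2) - b*(a2/2))/d - lam*(c*(b2 - c1/2) - b*(c2/2))/d = ka*\<nu> z*(h1*c - h2*b)"
  proof -
    have "Gv g (X z) (cdv g X 1 (DF g X 2 (nf NM \<nu>)) z) (fld (psi X h 2) z)
       - Gv g (X z) (cdv g X 2 (DF g X 1 (nf NM \<nu>)) z) (fld (psi X h 2) z) = ka*\<nu> z*(h1*c - h2*b)"
      using A_eq[OF z, of 2] unfolding ka_def h1_def h2_def c_def b_def by simp
    moreover have "Gv g (X z) (cdv g X 1 (DF g X 2 (nf NM \<nu>)) z) (fld (psi X h 2) z) = - L1 - (b*k121*lam - a*k122*lam)/d"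
      using B_eq[OF z, where j=2 and k=1 and i=2] z22[where k=1] pc[of 2] iv
      unfolding k121_def k122_def lam_def L1_def using dpos by (simp add: field_simps)
    moreover have "Gv g (X z) (cdv g X 2 (DF g X 1 (nf NM \<nu>)) z) (fld (psi X h 2) z) = - (- c*k221*lam + b*k222*lam)/d"
      using B_eq[OF z, where j=2 and k=2 and i=1] z0[where k=2 and i=1 and j=2] pc[of 1] iv
      unfolding k221_def k222_def lam_def using dpos by (simp add: field_simps)
    ultimately have "- L1 - (b*k121*lam - a*k122*lam)/d - (- (- c*k221*lam + b*k222*lam)/d) = ka*\<nu> z*(h1*c - h2*b)"
      by simp
    then show ?thesis unfolding kv by (simp add: algebra_simps diff_divide_distrib add_divide_distrib)
  qed
  have PQ: "a1 - c1 + 2*b2 = -2*ka*\<nu> z*lam*h1/K" "a2 - c2 - 2*b1 = 2*ka*\<nu> z*lam*h2/K"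
    using algF3[OF d_def _ _ _ ll KD1 KD2 C1 C2] dpos lpos K_pos by auto
  have rh: "\<And>i j. i \<in> {1,2} \<Longrightarrow> j \<in> {1,2} \<Longrightarrow> pd i (pd j h) z =
       (c * Gv g (X z) (cdv g X i (psi X h j) z) (fld (psi X h 1) z) * h1
       - b * (Gv g (X z) (cdv g X i (psi X h j) z) (fld (psi X h 1) z) * h2
             + Gv g (X z) (cdv g X i (psi X h j) z) (fld (psi X h 2) z) * h1)
       + a * Gv g (X z) (cdv g X i (psi X h j) z) (fld (psi X h 2) z) * h2) / d
       + IIfund g X h NM \<nu> z i j * \<nu> z"
    using RH[OF z] unfolding a_def b_def c_def d_def h1_def h2_def by simp
  have H11: "pd 1 (pd 1 h) z = (a1/2)*((c*h1 - b*h2)/d) + (b1 - a2/2)*((a*h2 - b*h1)/d) + lam*\<nu> z"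
    using rh[of 1 1] unfolding pars_form k111_def[symmetric] k112_def[symmetric] kv lam_def by simp
  have H22: "pd 2 (pd 2 h) z = (b2 - c1/2)*((c*h1 - b*h2)/d) + (c2/2)*((a*h2 - b*h1)/d) + lam*\<nu> z"
    using rh[of 2 2] iv unfolding pars_form k221_def[symmetric] k222_def[symmetric] kv lam_def by simp
  have N1: "(c*h1*h1 - 2*b*h1*h2 + a*h2*h2)/d + \<nu> z*\<nu> z = 1"
    using R1[OF z] unfolding a_def b_def c_def d_def h1_def h2_def by simp
  have f1: "(pd 1 (pd 1 h) z + pd 2 (pd 2 h) z)/lam = (2*K - ka*(1 - \<nu> z*\<nu> z))*\<nu> z/K"
    by (rule algF1[OF d_def _ _ _ PQ N1 H11 H22]) (use dpos lpos K_pos in auto)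
  show "lapII \<rho> (\<lambda>w. complex_of_real (h w)) z
        = complex_of_real ((2 * K - gauss_curv g (X z) * (1 - (\<nu> z)\<^sup>2)) * \<nu> z / K)"
    using lap_real[OF \<Omega>_open z h_smooth, of \<rho>] f1 unfolding lamv ka_def by (simp add: power2_eq_square)
  define f1 where "f1 = (\<lambda>v. (1/4) * (Ifund g X h v 1 1 - Ifund g X h v 2 2))"
  define f2 where "f2 = (\<lambda>v. (-1/2) * Ifund g X h v 1 2)"
  define Ef where "Ef = (\<lambda>v. complex_of_real (f1 v) + \<i> * complex_of_real (f2 v))"
  have Eloc: "E v = Ef v" if "v \<in> \<Omega>" for v
    using E_val[OF that] by (simp add: Ef_def f1_def f2_def complex_eq_iff)
  note di = Ifun_diff[OF z]
  have df1: "f1 differentiable (at z)" unfolding f1_def using di by simp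
  have df2: "f2 differentiable (at z)" unfolding f2_def using di by simp
  have pf1: "pd k f1 z = (1/4) * (pd k (\<lambda>v. Ifund g X h v 1 1) z - pd k (\<lambda>v. Ifund g X h v 2 2) z)" for k
    unfolding f1_def by (simp only: pd_cmult[OF differentiable_diff[OF di di]] pd_diff[OF di di])
  have pf2: "pd k f2 z = (-1/2) * pd k (\<lambda>v. Ifund g X h v 1 2) z" for k
    unfolding f2_def by (simp only: pd_cmult[OF di])
  have pE: "pd k E z = complex_of_real (pd k f1 z) + \<i> * complex_of_real (pd k f2 z)" for k
  proof -
    have "pd k E z = pd k Ef z" by (rule pd_local[OF \<Omega>_open z Eloc])
    also have "\<dots> = pd k (\<lambda>v. complex_of_real (f1 v)) z + pd k (\<lambda>v. \<i> * complex_of_real (f2 v)) z"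
      unfolding Ef_def by (rule pd_add) (use ofreal_diff[OF df1] ofreal_diff[OF df2] in auto)
    also have "\<dots> = complex_of_real (pd k f1 z) + \<i> * complex_of_real (pd k f2 z)"
      using pd_cmult[OF ofreal_diff[OF df2], of k \<i>] pd_ofreal[OF df1] pd_ofreal[OF df2] by simp
    finally show ?thesis .
  qed
  have dh: "h differentiable (at z)" using smooth_d0[OF h_smooth z] .
  have dzh: "dz (\<lambda>w. complex_of_real (h w)) z = (complex_of_real h1 - \<i> * complex_of_real h2) / 2"
    using pd_ofreal[OF dh, of 1] pd_ofreal[OF dh, of 2] unfolding dz_def h1_def h2_def by (simp add: pd_def)
  have dzE: "dzb E z = (pd 1 E z + \<i> * pd 2 E z) / 2" by (simp add: dzb_def pd_def)
  have r: "Re (dzb E z) = (a1 - c1 + 2*b2)/8" "Im (dzb E z) = (a2 - c2 - 2*b1)/8"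
    unfolding dzE pE pf1 pf2 a1_def a2_def b1_def b2_def c1_def c2_def by (simp_all add: field_simps)
  show "dzb E z = complex_of_real (- gauss_curv g (X z) * \<nu> z * \<rho> z / K) * dz (\<lambda>w. complex_of_real (h w)) z"
    unfolding complex_eq_iff dzh r PQ ka_def[symmetric] lamv using K_pos by (simp add: field_simps)
qed

end


theorem lemma6p2:
  fixes g :: metric and U \<Omega> :: "complex set"
    and X :: "complex \<Rightarrow> complex" and h :: "complex \<Rightarrow> real"
    and NM :: "complex \<Rightarrow> complex" and \<nu> :: "complex \<Rightarrow> real"
    and E :: "complex \<Rightarrow> complex" and F \<rho> :: "complex \<Rightarrow> real" and K :: real
  assumes U_open: "open U"
    and g_smooth: "\<forall>i\<in>{1,2}. \<forall>j\<in>{1,2}. smooth_on U (g i j)"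
    and g_sym: "\<forall>w\<in>U. g 1 2 w = g 2 1 w"
    and g_posdef: "\<forall>w\<in>U. g 1 1 w > 0 \<and> detg g w > 0"
    and \<Omega>_open: "open \<Omega>"
    and X_smooth: "smooth_on \<Omega> X" and h_smooth: "smooth_on \<Omega> h"
    and X_in: "X ` \<Omega> \<subseteq> U"
    and immersion: "\<forall>z\<in>\<Omega>. \<forall>a b::real.
        a *\<^sub>R pdx X z + b *\<^sub>R pdy X z = 0 \<and> a * pdx h z + b * pdy h z = 0 \<longrightarrow> a = 0 \<and> b = 0"
    and N_smooth: "smooth_on \<Omega> NM" "smooth_on \<Omega> \<nu>"
    and N_normal: "\<forall>z\<in>\<Omega>. \<forall>i\<in>{1,2}. gM g (X z) (NM z) (pd i X z) + \<nu> z * pd i h z = 0"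
    and N_unit: "\<forall>z\<in>\<Omega>. gM g (X z) (NM z) (NM z) + \<nu> z * \<nu> z = 1"
    and II_posdef: "\<forall>z\<in>\<Omega>. \<forall>a. a \<noteq> 0 \<longrightarrow> qf (IIfund g X h NM \<nu> z) a > 0"
    and K_pos: "K > 0"
    and K_const: "\<forall>z\<in>\<Omega>. ext_curv (Ifund g X h z) (IIfund g X h NM \<nu> z) = K"
    and I_conf: "\<forall>z\<in>\<Omega>. \<forall>a. qf (Ifund g X h z) a
                   = 2 * Re (E z * a\<^sup>2) + 2 * F z * (cmod a)\<^sup>2"
    and II_conf: "\<forall>z\<in>\<Omega>. \<forall>a. qf (IIfund g X h NM \<nu> z) a = 2 * \<rho> z * (cmod a)\<^sup>2"
  shows "\<forall>z\<in>\<Omega>.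
      lapII \<rho> (\<lambda>w. complex_of_real (h w)) z
        = complex_of_real ((2 * K - gauss_curv g (X z) * (1 - (\<nu> z)\<^sup>2)) * \<nu> z / K)
    \<and> lapII \<rho> (\<lambda>w. complex_of_real (\<nu> w)) z
        = complex_of_real (- 2 * mean_curv (Ifund g X h z) (IIfund g X h NM \<nu> z) * \<nu> z)
    \<and> dzb E z = complex_of_real (- gauss_curv g (X z) * \<nu> z * \<rho> z / K) * dz (\<lambda>w. complex_of_real (h w)) z"
  proof -
  have L: "lem6 g U \<Omega> X h NM \<nu> E F \<rho> K"
    unfolding lem6_def lem6_axioms_def surfN_def surfN_axioms_def surf_def surf_axioms_def metric_loc_def
    using assms by blast
  show ?thesis using lem6.F2[OF L] lem6.F13[OF L] by blast
qed

end
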